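(* Assume $\overline{\mathcal{G}}$ is compact with totally disconnected boundary $\partial\overline{\mathcal{G}}$. Then: - $\mathcal{A}$ is uniformly dense in the space of continuous real-valued functions on $\overline{\mathcal{G}}$; - the set of restrictions to $\partial\overline{\mathcal{G}}$ of functions in $\mathcal{A}$ is uniformly dense in the space of continuous real-valued functions on $\partial\overline{\mathcal{G}}$.
   Context: $\mathcal{G}$ is a connected, locally finite metric graph with countable vertex set and countable edge set. Each edge has a positive length and is identified with an interval. $\mathcal{G}$ carries the geodesic distance, and $\overline{\mathcal{G}}$ is its metric completion. A designated set of vertices, containing all vertices of degree $1$, forms the boundary vertices. $\mathcal{G}_{int}$ is $\mathcal{G}$ minus the boundary vertices, and $\partial\overline{\mathcal{G}}=\overline{\mathcal{G}}\setminus\mathcal{G}_{int}$. $\mathcal{A}$ is the set of functions $\phi:\overline{\mathcal{G}}\to\mathbb{R}$ such that: - $\phi$ is continuous on $\overline{\mathcal{G}}$; - $\phi$ is infinitely differentiable on the open edges of $\mathcal{G}$; - $\phi'=0$ in the complement of some finite collection of edges; - $\phi'=0$ in an open neighborhood of each vertex of $\mathcal{G}$. *)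

theory Defs
  imports "HOL-Analysis.Analysis"
begin

text \<open>Combinatorial data of a metric graph: vertex set V, edge set E,
  each edge e has an origin fst (ends e) and terminus snd (ends e) (loops and
  multiple edges allowed) and a length len e > 0; edge e is identified with the
  interval [0, len e], parameter t being the distance from the origin.\<close>

datatype ('v, 'e) gpoint = Vtx 'v | EPt 'e real

definition incident :: "'e set \<Rightarrow> ('e \<Rightarrow> 'v \<times> 'v) \<Rightarrow> 'v \<Rightarrow> 'e set" where
  "incident E ends v = {e \<in> E. fst (ends e) = v \<or> snd (ends e) = v}"

text \<open>Degree (a loop contributes 2).\<close>
definition degree :: "'e set \<Rightarrow> ('e \<Rightarrow> 'v \<times> 'v) \<Rightarrow> 'v \<Rightarrow> nat" where
  "degree E ends v = card {e \<in> E. fst (ends e) = v} + card {e \<in> E. snd (ends e) = v}"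

inductive walk :: "'e set \<Rightarrow> ('e \<Rightarrow> 'v \<times> 'v) \<Rightarrow> ('e \<Rightarrow> real) \<Rightarrow> 'v \<Rightarrow> 'v \<Rightarrow> real \<Rightarrow> bool"
  for E ends len where
  walk_nil: "walk E ends len u u 0"
| walk_fwd: "e \<in> E \<Longrightarrow> ends e = (u, x) \<Longrightarrow> walk E ends len x w L \<Longrightarrow> walk E ends len u w (len e + L)"
| walk_bwd: "e \<in> E \<Longrightarrow> ends e = (x, u) \<Longrightarrow> walk E ends len x w L \<Longrightarrow> walk E ends len u w (len e + L)"

definition metric_graph :: "'v set \<Rightarrow> 'e set \<Rightarrow> ('e \<Rightarrow> 'v \<times> 'v) \<Rightarrow> ('e \<Rightarrow> real) \<Rightarrow> bool" where
  "metric_graph V E ends len \<longleftrightarrow>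
     countable V \<and> countable E \<and>
     (\<forall>e\<in>E. fst (ends e) \<in> V \<and> snd (ends e) \<in> V \<and> len e > 0) \<and>
     (\<forall>v\<in>V. finite (incident E ends v)) \<and>
     (\<forall>u\<in>V. \<forall>w\<in>V. \<exists>L. walk E ends len u w L)"

definition gpoints :: "'v set \<Rightarrow> 'e set \<Rightarrow> ('e \<Rightarrow> real) \<Rightarrow> ('v, 'e) gpoint set" where
  "gpoints V E len = Vtx ` V \<union> {EPt e t |e t. e \<in> E \<and> 0 < t \<and> t < len e}"

definition vdist :: "'e set \<Rightarrow> ('e \<Rightarrow> 'v \<times> 'v) \<Rightarrow> ('e \<Rightarrow> real) \<Rightarrow> 'v \<Rightarrow> 'v \<Rightarrow> real" where
  "vdist E ends len u w = Inf {L. walk E ends len u w L}"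

fun gdist :: "'e set \<Rightarrow> ('e \<Rightarrow> 'v \<times> 'v) \<Rightarrow> ('e \<Rightarrow> real) \<Rightarrow> ('v, 'e) gpoint \<Rightarrow> ('v, 'e) gpoint \<Rightarrow> real" where
  "gdist E ends len (Vtx u) (Vtx w) = vdist E ends len u w"
| "gdist E ends len (Vtx u) (EPt f t) =
     min (vdist E ends len u (fst (ends f)) + t) (vdist E ends len u (snd (ends f)) + (len f - t))"
| "gdist E ends len (EPt e s) (Vtx w) =
     min (s + vdist E ends len (fst (ends e)) w) ((len e - s) + vdist E ends len (snd (ends e)) w)"
| "gdist E ends len (EPt e s) (EPt f t) =
     Min ({s + vdist E ends len (fst (ends e)) (fst (ends f)) + t,
           s + vdist E ends len (fst (ends e)) (snd (ends f)) + (len f - t),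
           (len e - s) + vdist E ends len (snd (ends e)) (fst (ends f)) + t,
           (len e - s) + vdist E ends len (snd (ends e)) (snd (ends f)) + (len f - t)}
          \<union> (if e = f then {\<bar>s - t\<bar>} else {}))"

text \<open>iota is an isometric embedding of the metric graph onto a dense subset of the
  complete metric space Gbar, i.e. Gbar (with iota) is the metric completion.\<close>
definition is_completion ::
  "'v set \<Rightarrow> 'e set \<Rightarrow> ('e \<Rightarrow> 'v \<times> 'v) \<Rightarrow> ('e \<Rightarrow> real) \<Rightarrow> (('v, 'e) gpoint \<Rightarrow> 'p::metric_space) \<Rightarrow> 'p set \<Rightarrow> bool" where
  "is_completion V E ends len iota Gbar \<longleftrightarrow>
     (\<forall>x\<in>gpoints V E len. \<forall>y\<in>gpoints V E len. dist (iota x) (iota y) = gdist E ends len x y) \<and>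
     complete Gbar \<and> Gbar = closure (iota ` gpoints V E len)"

definition Gint where
  "Gint V E len B iota = iota ` (gpoints V E len - Vtx ` B)"

definition gboundary where
  "gboundary V E len B iota Gbar = Gbar - Gint V E len B iota"

definition totally_disconnected :: "'a::topological_space set \<Rightarrow> bool" where
  "totally_disconnected S \<longleftrightarrow> (\<forall>x\<in>S. connected_component_set S x = {x})"

definition smooth_on :: "(real \<Rightarrow> real) \<Rightarrow> real set \<Rightarrow> bool" where
  "smooth_on f S \<longleftrightarrow> (\<forall>n. \<forall>t\<in>S. ((deriv ^^ n) f) differentiable (at t))"

definition edge_fun where
  "edge_fun iota phi e = (\<lambda>t. phi (iota (EPt e t)))"

definition algebraA ::
  "'v set \<Rightarrow> 'e set \<Rightarrow> ('e \<Rightarrow> 'v \<times> 'v) \<Rightarrow> ('e \<Rightarrow> real) \<Rightarrow> (('v, 'e) gpoint \<Rightarrow> 'p::metric_space) \<Rightarrow> 'p set \<Rightarrow> ('p \<Rightarrow> real) set" where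
  "algebraA V E ends len iota Gbar =
    {phi. continuous_on Gbar phi \<and>
       (\<forall>e\<in>E. smooth_on (edge_fun iota phi e) {0<..<len e}) \<and>
       (\<exists>F. finite F \<and> F \<subseteq> E \<and>
          (\<forall>e\<in>E - F. \<forall>t\<in>{0<..<len e}. deriv (edge_fun iota phi e) t = 0)) \<and>
       (\<forall>v\<in>V. \<exists>r>0. \<forall>e\<in>E. \<forall>t\<in>{0<..<len e}.
          gdist E ends len (Vtx v) (EPt e t) < r \<longrightarrow> deriv (edge_fun iota phi e) t = 0)}"

end

theory Submission
  imports Defs "HOL-Computational_Algebra.Polynomial"
begin


definition Cn :: "nat \<Rightarrow> (real \<Rightarrow> real) \<Rightarrow> bool" where
  "Cn n f \<longleftrightarrow> (\<forall>k\<le>n. \<forall>x. (deriv^^k) f differentiable (at x))"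

definition gsmooth :: "(real \<Rightarrow> real) \<Rightarrow> bool" where
  "gsmooth f \<longleftrightarrow> (\<forall>n. Cn n f)"

lemma Cn_0: "Cn 0 f \<longleftrightarrow> (\<forall>x. f differentiable (at x))"
  by (simp add: Cn_def)

lemma Cn_Suc: "Cn (Suc n) f \<longleftrightarrow> (\<forall>x. f differentiable (at x)) \<and> Cn n (deriv f)"
proof -
  have "(\<forall>k\<le>Suc n. P k) \<longleftrightarrow> P 0 \<and> (\<forall>k\<le>n. P (Suc k))" for P
    by (metis Suc_le_mono le0 not0_implies_Suc)
  then show ?thesis unfolding Cn_def by (simp add: funpow_Suc_right del: funpow.simps)
qed

lemma Cn_diff: "Cn n f \<Longrightarrow> f differentiable (at x)"
  unfolding Cn_def by (metis funpow_0 le0)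

lemma diffI: fixes f :: "real \<Rightarrow> real" shows "DERIV f x :> D \<Longrightarrow> f differentiable (at x)"
  using real_differentiable_def by blast

lemma diffD: fixes f :: "real \<Rightarrow> real" shows "f differentiable (at x) \<Longrightarrow> DERIV f x :> deriv f x"
  by (simp add: DERIV_deriv_iff_real_differentiable)

lemma deriv_add_fun:
  fixes f g :: "real \<Rightarrow> real"
  assumes "\<forall>x. f differentiable (at x)" "\<forall>x. g differentiable (at x)"
  shows "deriv (\<lambda>x. f x + g x) = (\<lambda>x. deriv f x + deriv g x)"
proof
  fix x
  have "DERIV f x :> deriv f x" "DERIV g x :> deriv g x"
    using assms diffD by blast+
  then show "deriv (\<lambda>x. f x + g x) x = deriv f x + deriv g x"
    by (intro DERIV_imp_deriv derivative_intros)
qed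

lemma deriv_mult_fun:
  fixes f g :: "real \<Rightarrow> real"
  assumes "\<forall>x. f differentiable (at x)" "\<forall>x. g differentiable (at x)"
  shows "deriv (\<lambda>x. f x * g x) = (\<lambda>x. deriv f x * g x + f x * deriv g x)"
proof
  fix x
  have "DERIV f x :> deriv f x" "DERIV g x :> deriv g x"
    using assms diffD by blast+
  then show "deriv (\<lambda>x. f x * g x) x = deriv f x * g x + f x * deriv g x"
    by (intro DERIV_imp_deriv) (auto intro!: derivative_eq_intros)
qed

lemma Cn_add: "Cn n f \<Longrightarrow> Cn n g \<Longrightarrow> Cn n (\<lambda>x. f x + g x)"
proof (induction n arbitrary: f g)
  case 0
  then show ?case by (auto simp: Cn_0)
next
  case (Suc n)
  then show ?case
    by (auto simp: Cn_Suc deriv_add_fun intro!: Suc.IH)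
qed

lemma Cn_const: "Cn n (\<lambda>x. c)"
proof (induction n arbitrary: c)
  case 0 then show ?case by (simp add: Cn_0)
next
  case (Suc n)
  have "deriv (\<lambda>x. c) = (\<lambda>x. 0)" by (rule ext) simp
  then show ?case using Suc by (simp add: Cn_Suc)
qed

lemma Cn_mono: "Cn n f \<Longrightarrow> m \<le> n \<Longrightarrow> Cn m f"
  by (auto simp: Cn_def)

lemma Cn_mult: "Cn n f \<Longrightarrow> Cn n g \<Longrightarrow> Cn n (\<lambda>x. f x * g x)"
proof (induction n arbitrary: f g)
  case 0
  then show ?case by (auto simp: Cn_0)
next
  case (Suc n)
  then have d: "\<forall>x. f differentiable (at x)" "\<forall>x. g differentiable (at x)"
    and c: "Cn n (deriv f)" "Cn n (deriv g)"
    by (auto simp: Cn_Suc)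
  have "Cn n f" "Cn n g" using Suc.prems Cn_mono le_SucI by blast+
  show ?case
    using d c \<open>Cn n f\<close> \<open>Cn n g\<close> by (auto simp: Cn_Suc deriv_mult_fun intro!: Cn_add Suc.IH)
qed

lemma Cn_cmult: "Cn n f \<Longrightarrow> Cn n (\<lambda>x. c * f x)"
  using Cn_mult[OF Cn_const] by blast

lemma Cn_minus: "Cn n f \<Longrightarrow> Cn n (\<lambda>x. - f x)"
  using Cn_cmult[of n f "-1"] by simp

lemma Cn_inverse: "Cn n f \<Longrightarrow> (\<forall>x. f x \<noteq> 0) \<Longrightarrow> Cn n (\<lambda>x. inverse (f x))"
proof (induction n arbitrary: f)
  case 0
  then show ?case
    by (auto simp: Cn_0 intro!: diffI DERIV_inverse_fun diffD)
next
  case (Suc n)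
  then have d: "\<forall>x. f differentiable (at x)" and c: "Cn n (deriv f)"
    by (auto simp: Cn_Suc)
  have c2: "Cn n f" using Suc.prems Cn_mono le_SucI by blast
  have di: "\<forall>x. (\<lambda>x. inverse (f x)) differentiable (at x)"
    using d Suc.prems by (auto intro!: diffI DERIV_inverse_fun diffD)
  have "deriv (\<lambda>x. inverse (f x)) = (\<lambda>x. - (deriv f x * (inverse (f x) * inverse (f x))))"
  proof
    fix x
    have "DERIV (\<lambda>x. inverse (f x)) x :> - (deriv f x * inverse (f x ^ Suc (Suc 0)))"
      using d Suc.prems by (intro DERIV_inverse_fun diffD) auto
    then show "deriv (\<lambda>x. inverse (f x)) x = - (deriv f x * (inverse (f x) * inverse (f x)))"
      by (simp add: DERIV_imp_deriv power2_eq_square)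
  qed
  moreover have "Cn n (\<lambda>x. inverse (f x))" using Suc c2 by auto
  ultimately show ?case
    using di c by (auto simp: Cn_Suc intro!: Cn_minus Cn_mult)
qed

lemma affD: fixes f :: "real \<Rightarrow> real" shows "f differentiable (at (a * x + b)) \<Longrightarrow> DERIV (\<lambda>x. f (a * x + b)) x :> deriv f (a * x + b) * a"
proof -
  assume "f differentiable (at (a * x + b))"
  then have 1: "DERIV f (a * x + b) :> deriv f (a * x + b)" by (rule diffD)
  have 2: "DERIV (\<lambda>x. a * x + b) x :> a"
    by (auto intro!: derivative_eq_intros)
  show ?thesis using DERIV_chain2[OF 1 2] .
qed

lemma Cn_affine: "Cn n f \<Longrightarrow> Cn n (\<lambda>x. f (a * x + b))"
proof (induction n arbitrary: f)
  case 0
  then show ?case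
    using diffI[OF affD] by (auto simp: Cn_0)
next
  case (Suc n)
  then have d: "\<forall>x. f differentiable (at x)" and c: "Cn n (deriv f)"
    by (auto simp: Cn_Suc)
  have di: "\<forall>x. (\<lambda>x. f (a * x + b)) differentiable (at x)"
    using d diffI[OF affD] by auto
  have "deriv (\<lambda>x. f (a * x + b)) = (\<lambda>x. a * deriv f (a * x + b))"
  proof
    fix x
    show "deriv (\<lambda>x. f (a * x + b)) x = a * deriv f (a * x + b)"
      using DERIV_imp_deriv[OF affD[of f a x b]] d by (simp add: mult.commute)
  qed
  then show ?case using di c Suc.IH[OF c] by (auto simp: Cn_Suc intro!: Cn_cmult)
qed


lemma poly_exp_lim: fixes r :: "real poly" shows "((\<lambda>z. poly r z * exp (- z)) \<longlongrightarrow> 0) at_top"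
proof -
  have eq: "(\<lambda>z. poly r z * exp (- z)) = (\<lambda>z. \<Sum>i\<le>Polynomial.degree r. coeff r i * (z ^ i / exp z))"
    by (rule ext) (simp add: poly_altdef sum_distrib_right exp_minus divide_inverse mult.assoc)
  have "((\<lambda>z. \<Sum>i\<le>Polynomial.degree r. coeff r i * (z ^ i / exp z)) \<longlongrightarrow> 0) at_top"
    by (rule tendsto_null_sum) (intro tendsto_mult_right_zero tendsto_power_div_exp_0)
  then show ?thesis by (simp add: eq)
qed

definition hp :: "real poly \<Rightarrow> real \<Rightarrow> real" where
  "hp p x = (if 0 < x then poly p (inverse x) * exp (- inverse x) else 0)"

definition qp :: "real poly \<Rightarrow> real poly" where
  "qp p = monom 1 2 * (p - pderiv p)"

lemma hp_deriv_pos: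
  assumes "0 < x"
  shows "DERIV (hp p) x :> hp (qp p) x"
proof -
  have d1: "DERIV (\<lambda>x. poly p (inverse x)) x :> poly (pderiv p) (inverse x) * (- (inverse x ^ Suc (Suc 0)))"
    using assms by (intro DERIV_chain2[OF poly_DERIV] DERIV_inverse) auto
  have d2: "DERIV (\<lambda>x. exp (- inverse x)) x :> exp (- inverse x) * (- (- (inverse x ^ Suc (Suc 0))))"
    using assms by (intro DERIV_chain2[OF DERIV_exp] DERIV_minus DERIV_inverse) auto
  have d: "DERIV (\<lambda>x. poly p (inverse x) * exp (- inverse x)) x :> hp (qp p) x"
    by (rule DERIV_cong[OF DERIV_mult[OF d1 d2]])
      (use assms in \<open>simp add: hp_def qp_def poly_monom algebra_simps power2_eq_square\<close>)
  have ev: "eventually (\<lambda>y. hp p y = poly p (inverse y) * exp (- inverse y)) (nhds x)"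
    using eventually_nhds_in_open[of "{0<..}" x] assms
    by (auto elim!: eventually_mono simp: hp_def)
  show ?thesis
    using d by (subst DERIV_cong_ev[OF refl ev refl])
qed

lemma hp_deriv_neg:
  assumes "x < 0"
  shows "DERIV (hp p) x :> hp (qp p) x"
proof -
  have ev: "eventually (\<lambda>y. hp p y = 0) (nhds x)"
    using eventually_nhds_in_open[of "{..<0}" x] assms
    by (auto elim!: eventually_mono simp: hp_def)
  have "hp (qp p) x = 0" using assms by (simp add: hp_def)
  then show ?thesis
    by (subst DERIV_cong_ev[OF refl ev refl]) simp
qed

lemma hp_deriv_0: "DERIV (hp p) 0 :> hp (qp p) 0"
proof -
  have z: "hp (qp p) 0 = 0" "hp p 0 = 0" by (simp_all add: hp_def)
  have L: "((\<lambda>y. (hp p y - hp p 0) / (y - 0)) \<longlongrightarrow> 0) (at_left 0)"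
  proof (rule Lim_transform_eventually[OF tendsto_const])
    show "\<forall>\<^sub>F y in at_left 0. 0 = (hp p y - hp p 0) / (y - 0)"
      unfolding eventually_at_left_field by (auto simp: hp_def intro!: exI[of _ "-1"])
  qed
  have lim: "((\<lambda>y. poly (pCons 0 p) (inverse y) * exp (- inverse y)) \<longlongrightarrow> 0) (at_right 0)"
    using filterlim_compose[OF poly_exp_lim[of "pCons 0 p"] filterlim_inverse_at_top_right] by simp
  have R: "((\<lambda>y. (hp p y - hp p 0) / (y - 0)) \<longlongrightarrow> 0) (at_right 0)"
  proof (rule Lim_transform_eventually[OF lim])
    show "\<forall>\<^sub>F y in at_right 0. poly (pCons 0 p) (inverse y) * exp (- inverse y) = (hp p y - hp p 0) / (y - 0)"
      unfolding eventually_at_right_field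
      by (auto simp: hp_def divide_inverse intro!: exI[of _ 1])
  qed
  show ?thesis
    unfolding has_field_derivative_iff z(1) by (rule filterlim_split_at[OF L R])
qed

lemma hp_deriv: "DERIV (hp p) x :> hp (qp p) x"
  using hp_deriv_pos hp_deriv_neg hp_deriv_0 by (metis linorder_neqE_linordered_idom)

lemma hp_Cn: "Cn n (hp p)"
proof (induction n arbitrary: p)
  case 0
  then show ?case by (auto simp: Cn_0 intro: diffI[OF hp_deriv])
next
  case (Suc n)
  have "deriv (hp p) = hp (qp p)" using hp_deriv DERIV_imp_deriv by blast
  then show ?case using Suc by (auto simp: Cn_Suc intro: diffI[OF hp_deriv])
qed

definition flat :: "real \<Rightarrow> real" where
  "flat x = (if 0 < x then exp (- inverse x) else 0)"

lemma flat_hp: "flat = hp 1"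
  by (rule ext) (simp add: flat_def hp_def)

lemma flat_smooth: "gsmooth flat"
  by (simp add: gsmooth_def flat_hp hp_Cn)

lemma flat_pos: "0 < x \<Longrightarrow> 0 < flat x" and flat_zero: "x \<le> 0 \<Longrightarrow> flat x = 0"
  and flat_nonneg: "0 \<le> flat x"
  by (auto simp: flat_def)


locale MG =
  fixes V :: "'v set" and E :: "'e set" and ends :: "'e \<Rightarrow> 'v \<times> 'v" and len :: "'e \<Rightarrow> real"
  assumes mg: "metric_graph V E ends len"
begin

abbreviation "P \<equiv> gpoints V E len"
abbreviation "vd \<equiv> vdist E ends len"
abbreviation "gd \<equiv> gdist E ends len"

lemma len_pos: "e \<in> E \<Longrightarrow> 0 < len e"
  using mg by (auto simp: metric_graph_def)
lemma fst_V: "e \<in> E \<Longrightarrow> fst (ends e) \<in> V"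
  using mg by (auto simp: metric_graph_def)
lemma snd_V: "e \<in> E \<Longrightarrow> snd (ends e) \<in> V"
  using mg by (auto simp: metric_graph_def)
lemma fin_inc: "v \<in> V \<Longrightarrow> finite (incident E ends v)"
  using mg by (auto simp: metric_graph_def)
lemma walk_ex: "u \<in> V \<Longrightarrow> w \<in> V \<Longrightarrow> \<exists>L. walk E ends len u w L"
  using mg by (auto simp: metric_graph_def)

lemma walk_nonneg: "walk E ends len u w L \<Longrightarrow> 0 \<le> L"
  by (induction rule: walk.induct) (auto dest: len_pos)

lemma vd_nonneg: "u \<in> V \<Longrightarrow> w \<in> V \<Longrightarrow> 0 \<le> vd u w"
  unfolding vdist_def using walk_ex walk_nonneg by (intro cInf_greatest) auto

lemma vd_le: "walk E ends len u w L \<Longrightarrow> vd u w \<le> L"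
  unfolding vdist_def using walk_nonneg by (intro cInf_lower) (auto simp: bdd_below_def)

lemma vd_refl[simp]: "vd u u = 0"
proof -
  have "vd u u \<le> 0" using vd_le[OF walk.walk_nil] .
  moreover have "0 \<le> vd u u"
    unfolding vdist_def using walk.walk_nil[of E ends len u] walk_nonneg by (intro cInf_greatest) auto
  ultimately show ?thesis by simp
qed

lemma vd_edge: "e \<in> E \<Longrightarrow> vd (fst (ends e)) (snd (ends e)) \<le> len e"
proof -
  assume e: "e \<in> E"
  have "walk E ends len (fst (ends e)) (snd (ends e)) (len e + 0)"
    by (rule walk.walk_fwd[OF e]) (auto intro: walk.walk_nil)
  then show ?thesis using vd_le by fastforce
qed

definition mlen :: "'v \<Rightarrow> real" where
  "mlen u = (if incident E ends u = {} then 1 else Min (len ` incident E ends u))"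

lemma mlen_pos: "u \<in> V \<Longrightarrow> 0 < mlen u"
  unfolding mlen_def using fin_inc by (auto simp: incident_def len_pos)

lemma mlen_le: "e \<in> E \<Longrightarrow> fst (ends e) = u \<or> snd (ends e) = u \<Longrightarrow> mlen u \<le> len e"
proof -
  assume e: "e \<in> E" "fst (ends e) = u \<or> snd (ends e) = u"
  then have u: "u \<in> V" using fst_V snd_V by auto
  have "e \<in> incident E ends u" using e by (auto simp: incident_def)
  then show ?thesis unfolding mlen_def using fin_inc[OF u] by auto
qed

lemma walk_lb: "walk E ends len u w L \<Longrightarrow> u \<noteq> w \<Longrightarrow> mlen u \<le> L"
proof (induction rule: walk.induct)
  case (walk_nil u)
  then show ?case by simp
next
  case (walk_fwd e u x w L)
  then have "mlen u \<le> len e" by (intro mlen_le) auto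
  then show ?case using walk_nonneg[OF walk_fwd(3)] by auto
next
  case (walk_bwd e x u w L)
  then have "mlen u \<le> len e" by (intro mlen_le) auto
  then show ?case using walk_nonneg[OF walk_bwd(3)] by auto
qed

lemma vd_lb: "u \<in> V \<Longrightarrow> w \<in> V \<Longrightarrow> u \<noteq> w \<Longrightarrow> mlen u \<le> vd u w"
  unfolding vdist_def using walk_ex walk_lb by (intro cInf_greatest) auto

lemma gpointsE:
  assumes "x \<in> P"
  obtains v where "x = Vtx v" "v \<in> V" | e t where "x = EPt e t" "e \<in> E" "0 < t" "t < len e"
  using assms unfolding gpoints_def by auto

lemma Vtx_P: "v \<in> V \<Longrightarrow> Vtx v \<in> P" and EPt_P: "e \<in> E \<Longrightarrow> 0 < t \<Longrightarrow> t < len e \<Longrightarrow> EPt e t \<in> P"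
  unfolding gpoints_def by auto

lemma Min4: "Min ({a, b, c, d} \<union> X) = min (min (min a b) c) d" if "X = {}"
  using that by (simp add: min.assoc min.commute min.left_commute)

lemma Min5: "Min ({a, b, c, d} \<union> {z}) = min (min (min (min a b) c) d) z"
  by (simp add: min.assoc min.commute min.left_commute)

lemma gd_EE: "gd (EPt e s) (EPt f t) =
   (let m = min (min (min (s + vd (fst (ends e)) (fst (ends f)) + t)
           (s + vd (fst (ends e)) (snd (ends f)) + (len f - t)))
           ((len e - s) + vd (snd (ends e)) (fst (ends f)) + t))
           ((len e - s) + vd (snd (ends e)) (snd (ends f)) + (len f - t))
    in if e = f then min m \<bar>s - t\<bar> else m)"
  by (simp add: Min5 Min4 Let_def min.assoc)

lemma gd_pos:
  assumes "x \<in> P" "y \<in> P" "x \<noteq> y"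
  shows "0 < gd x y"
proof (rule gpointsE[OF assms(1)])
  fix u assume x: "x = Vtx u" "u \<in> V"
  show ?thesis
  proof (rule gpointsE[OF assms(2)])
    fix w assume "y = Vtx w" "w \<in> V"
    then show ?thesis using x assms(3) vd_lb[of u w] mlen_pos[of u] by auto
  next
    fix f t assume "y = EPt f t" "f \<in> E" "0 < t" "t < len f"
    then show ?thesis using x vd_nonneg[of u "fst (ends f)"] vd_nonneg[of u "snd (ends f)"]
      by (auto simp: fst_V snd_V)
  qed
next
  fix e s assume x: "x = EPt e s" "e \<in> E" "0 < s" "s < len e"
  show ?thesis
  proof (rule gpointsE[OF assms(2)])
    fix w assume "y = Vtx w" "w \<in> V"
    then show ?thesis using x vd_nonneg[of "fst (ends e)" w] vd_nonneg[of "snd (ends e)" w]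
      by (auto simp: fst_V snd_V)
  next
    fix f t assume y: "y = EPt f t" "f \<in> E" "0 < t" "t < len f"
    have a: "0 \<le> vd (fst (ends e)) (fst (ends f))" "0 \<le> vd (fst (ends e)) (snd (ends f))"
      "0 \<le> vd (snd (ends e)) (fst (ends f))" "0 \<le> vd (snd (ends e)) (snd (ends f))"
      using x y by (auto intro!: vd_nonneg fst_V snd_V)
    have "s \<noteq> t \<or> e \<noteq> f" using x y assms(3) by auto
    then show ?thesis using x y a unfolding gd_EE Let_def by auto
  qed
qed

end


context MG begin

lemma gd_same_le: "gd (EPt e s) (EPt e t) \<le> \<bar>s - t\<bar>"
  unfolding gd_EE Let_def by simp

lemma gd_fst_le: "gd (Vtx (fst (ends e))) (EPt e t) \<le> t"
  by simp

lemma gd_snd_le: "gd (Vtx (snd (ends e))) (EPt e t) \<le> len e - t"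
  by simp

lemma gd_VV: "gd (Vtx u) (Vtx w) = vd u w" by simp

lemma L5:
  assumes e: "e \<in> E" "0 < s" "s < len e" and x: "x \<in> P"
    and lt: "gd (EPt e s) x < min s (len e - s)"
  shows "\<exists>t. x = EPt e t \<and> gd (EPt e s) x = \<bar>s - t\<bar>"
proof (rule gpointsE[OF x])
  fix w assume "x = Vtx w" "w \<in> V"
  then show ?thesis using lt e vd_nonneg[of "fst (ends e)" w] vd_nonneg[of "snd (ends e)" w]
    by (auto simp: fst_V snd_V)
next
  fix f t assume y: "x = EPt f t" "f \<in> E" "0 < t" "t < len f"
  have a: "0 \<le> vd (fst (ends e)) (fst (ends f))" "0 \<le> vd (fst (ends e)) (snd (ends f))"
    "0 \<le> vd (snd (ends e)) (fst (ends f))" "0 \<le> vd (snd (ends e)) (snd (ends f))"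
    using e y by (auto intro!: vd_nonneg fst_V snd_V)
  show ?thesis
  proof (cases "e = f")
    case True
    then show ?thesis using y a lt e unfolding gd_EE Let_def by (auto simp: min_def split: if_splits)
  next
    case False
    then show ?thesis using y a lt e unfolding gd_EE Let_def by auto
  qed
qed

lemma L6:
  assumes v: "v \<in> V" and x: "x \<in> P" and lt: "gd (Vtx v) x < mlen v"
  shows "x = Vtx v \<or> (\<exists>e t. x = EPt e t \<and> e \<in> E \<and> 0 < t \<and> t < len e \<and>
           ((fst (ends e) = v \<and> t = gd (Vtx v) x) \<or> (snd (ends e) = v \<and> len e - t = gd (Vtx v) x)))"
proof (rule gpointsE[OF x])
  fix w assume "x = Vtx w" "w \<in> V"
  then show ?thesis using lt v vd_lb[of v w] by auto
next
  fix e t assume y: "x = EPt e t" "e \<in> E" "0 < t" "t < len e"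
  have a: "0 \<le> vd v (fst (ends e))" "0 \<le> vd v (snd (ends e))"
    using v y by (auto intro!: vd_nonneg fst_V snd_V)
  have b: "fst (ends e) \<noteq> v \<Longrightarrow> mlen v \<le> vd v (fst (ends e))"
     "snd (ends e) \<noteq> v \<Longrightarrow> mlen v \<le> vd v (snd (ends e))"
    using v y by (auto intro!: vd_lb fst_V snd_V)
  have g: "gd (Vtx v) x = min (vd v (fst (ends e)) + t) (vd v (snd (ends e)) + (len e - t))"
    using y by simp
  show ?thesis
  proof (cases "vd v (fst (ends e)) + t \<le> vd v (snd (ends e)) + (len e - t)")
    case True
    then have "fst (ends e) = v" using b(1) lt g y by (cases "fst (ends e) = v") (auto simp: min_def)
    then show ?thesis using y g True by auto
  next
    case False
    then have "snd (ends e) = v" using b(2) lt g y by (cases "snd (ends e) = v") (auto simp: min_def)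
    then show ?thesis using y g False by auto
  qed
qed

lemma L7:
  assumes e: "e \<in> E" "0 < t" "t < len e" and x: "x \<in> P" and ne: "\<forall>t'. x \<noteq> EPt e t'"
  shows "min (t + gd (Vtx (fst (ends e))) x) (len e - t + gd (Vtx (snd (ends e))) x) \<le> gd (EPt e t) x"
proof (rule gpointsE[OF x])
  fix w assume "x = Vtx w" "w \<in> V"
  then show ?thesis by simp
next
  fix f t' assume y: "x = EPt f t'" "f \<in> E" "0 < t'" "t' < len f"
  then have "f \<noteq> e" using ne by auto
  then show ?thesis using y unfolding gd_EE Let_def by (simp add: min_def)
qed

lemma mid_sep:
  assumes "e \<in> E" "f \<in> E" "e \<noteq> f"
  shows "len e / 2 \<le> gd (EPt e (len e / 2)) (EPt f (len f / 2))"
proof -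
  have a: "0 \<le> vd (fst (ends e)) (fst (ends f))" "0 \<le> vd (fst (ends e)) (snd (ends f))"
    "0 \<le> vd (snd (ends e)) (fst (ends f))" "0 \<le> vd (snd (ends e)) (snd (ends f))"
    using assms by (auto intro!: vd_nonneg fst_V snd_V)
  then show ?thesis using assms len_pos[of f] unfolding gd_EE Let_def by auto
qed

end


locale MGC = MG V E ends len
  for V :: "'v set" and E :: "'e set" and ends :: "'e \<Rightarrow> 'v \<times> 'v" and len :: "'e \<Rightarrow> real" +
  fixes iota :: "('v, 'e) gpoint \<Rightarrow> 'p::metric_space" and Gbar :: "'p set"
  assumes comp: "is_completion V E ends len iota Gbar" and cpt: "compact Gbar"
begin

declare gdist.simps[simp del] gd_VV[simp]

abbreviation "vpt v \<equiv> iota (Vtx v)"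
abbreviation "ept e t \<equiv> iota (EPt e t)"

lemma iso: "x \<in> P \<Longrightarrow> y \<in> P \<Longrightarrow> dist (iota x) (iota y) = gd x y"
  using comp by (simp add: is_completion_def)

lemma Gbar_eq: "Gbar = closure (iota ` P)"
  using comp by (simp add: is_completion_def)

lemma iP_sub: "iota ` P \<subseteq> Gbar"
  unfolding Gbar_eq by (rule closure_subset)

lemma iota_inj: "x \<in> P \<Longrightarrow> y \<in> P \<Longrightarrow> iota x = iota y \<Longrightarrow> x = y"
  using iso[of x y] gd_pos[of x y] by force

lemma trap:
  assumes "closed K" "q \<in> Gbar" "dist c q < \<rho>" "\<forall>x\<in>P. dist c (iota x) < \<rho> \<longrightarrow> iota x \<in> K"
  shows "q \<in> K"
proof -
  have "q \<in> ball c \<rho> \<inter> closure (iota ` P)" using assms Gbar_eq by auto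
  also have "\<dots> \<subseteq> closure (ball c \<rho> \<inter> iota ` P)" by (rule open_Int_closure_subset) simp
  also have "\<dots> \<subseteq> closure K" using assms(4) by (intro closure_mono) auto
  finally show ?thesis using assms(1) by simp
qed

lemma lip_compact:
  fixes \<gamma> :: "real \<Rightarrow> 'p"
  assumes "\<forall>s\<in>{a..b}. \<forall>t\<in>{a..b}. dist (\<gamma> s) (\<gamma> t) \<le> \<bar>s - t\<bar>"
  shows "compact (\<gamma> ` {a..b})"
proof -
  have "1-lipschitz_on {a..b} \<gamma>"
    using assms by (intro lipschitz_onI) (auto simp: dist_real_def)
  then have "continuous_on {a..b} \<gamma>" by (rule lipschitz_on_continuous_on)
  then show ?thesis by (intro compact_continuous_image) auto
qed

lemma C3:
  assumes e: "e \<in> E" "0 < s" "s < len e" and q: "q \<in> Gbar"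
    and lt: "dist (ept e s) q < min s (len e - s)"
  shows "\<exists>t. 0 < t \<and> t < len e \<and> q = ept e t \<and> dist (ept e s) q = \<bar>s - t\<bar>"
proof -
  define r where "r = min s (len e - s)"
  define \<rho> where "\<rho> = (dist (ept e s) q + r) / 2"
  have \<rho>: "dist (ept e s) q < \<rho>" "\<rho> < r" using lt unfolding \<rho>_def r_def by auto
  have sub: "t \<in> {s - \<rho>..s + \<rho>} \<Longrightarrow> 0 < t \<and> t < len e" for t using \<rho> unfolding r_def by auto
  have "compact ((\<lambda>t. ept e t) ` {s - \<rho>..s + \<rho>})"
  proof (rule lip_compact, intro ballI)
    fix t t' assume "t \<in> {s - \<rho>..s + \<rho>}" "t' \<in> {s - \<rho>..s + \<rho>}"
    then show "dist (ept e t) (ept e t') \<le> \<bar>t - t'\<bar>"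
      using sub e iso[of "EPt e t" "EPt e t'"] gd_same_le[of e t t'] by (auto simp: EPt_P)
  qed
  then have cl: "closed ((\<lambda>t. ept e t) ` {s - \<rho>..s + \<rho>})" by (rule compact_imp_closed)
  have "q \<in> (\<lambda>t. ept e t) ` {s - \<rho>..s + \<rho>}"
  proof (rule trap[OF cl q \<rho>(1)], intro ballI impI)
    fix x assume x: "x \<in> P" "dist (ept e s) (iota x) < \<rho>"
    then have "gd (EPt e s) x < min s (len e - s)" using iso[of "EPt e s" x] e \<rho> EPt_P unfolding r_def by auto
    then obtain t where t: "x = EPt e t" "gd (EPt e s) x = \<bar>s - t\<bar>" using L5 e x by blast
    then have "\<bar>s - t\<bar> < \<rho>" using x iso[of "EPt e s" x] e EPt_P by auto
    then have "t \<in> {s - \<rho>..s + \<rho>}" by auto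
    then show "iota x \<in> (\<lambda>t. ept e t) ` {s - \<rho>..s + \<rho>}" using t(1) by blast
  qed
  then obtain t where t: "t \<in> {s - \<rho>..s + \<rho>}" "q = ept e t" by blast
  have tt: "0 < t" "t < len e" using sub[OF t(1)] by auto
  have "gd (EPt e s) (EPt e t) < min s (len e - s)" using lt t iso[of "EPt e s" "EPt e t"] e tt by (auto simp: EPt_P)
  then obtain t' where "EPt e t = EPt e t'" "gd (EPt e s) (EPt e t) = \<bar>s - t'\<bar>"
    using L5[of e s "EPt e t"] e tt EPt_P by blast
  then show ?thesis using t tt iso[of "EPt e s" "EPt e t"] e by (auto simp: EPt_P)
qed


lemma C4:
  assumes v: "v \<in> V" and q: "q \<in> Gbar" and lt: "dist (vpt v) q < mlen v"
  shows "\<exists>x\<in>P. q = iota x"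
proof -
  define \<rho> where "\<rho> = (dist (vpt v) q + mlen v) / 2"
  have \<rho>: "dist (vpt v) q < \<rho>" "\<rho> < mlen v" using lt unfolding \<rho>_def by auto
  define I1 where "I1 = {e\<in>E. fst (ends e) = v}"
  define I2 where "I2 = {e\<in>E. snd (ends e) = v}"
  define g1 where "g1 e t = (if t = 0 then vpt v else ept e t)" for e t
  define g2 where "g2 e t = (if t = 0 then vpt v else ept e (len e - t))" for e t
  have fI: "finite I1" "finite I2"
    using fin_inc[OF v] unfolding I1_def I2_def incident_def by (auto elim: finite_subset[rotated])
  have le1: "e \<in> I1 \<Longrightarrow> \<rho> < len e" "e \<in> I2 \<Longrightarrow> \<rho> < len e" for e
    using mlen_le[of e v] \<rho> unfolding I1_def I2_def by force+
  have VP: "Vtx v \<in> P" using v by (rule Vtx_P)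
  have c1: "compact (g1 e ` {0..\<rho>})" if e: "e \<in> I1" for e
  proof (rule lip_compact, intro ballI)
    fix t t' assume tt: "t \<in> {0..\<rho>}" "t' \<in> {0..\<rho>}"
    have eE: "e \<in> E" "fst (ends e) = v" using e unfolding I1_def by auto
    have P1: "0 < t \<Longrightarrow> EPt e t \<in> P" "0 < t' \<Longrightarrow> EPt e t' \<in> P"
      using tt le1(1)[OF e] eE by (auto intro!: EPt_P)
    show "dist (g1 e t) (g1 e t') \<le> \<bar>t - t'\<bar>"
    proof (cases "t = 0"; cases "t' = 0")
      assume "t = 0" "t' = 0" then show ?thesis by (simp add: g1_def)
    next
      assume "t = 0" "t' \<noteq> 0"
      then show ?thesis using iso[OF VP P1(2)] gd_fst_le[of e t'] tt eE by (simp add: g1_def)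
    next
      assume "t \<noteq> 0" "t' = 0"
      then show ?thesis using iso[OF VP P1(1)] gd_fst_le[of e t] tt eE by (simp add: g1_def dist_commute)
    next
      assume "t \<noteq> 0" "t' \<noteq> 0"
      then show ?thesis using iso[OF P1] gd_same_le[of e t t'] tt by (simp add: g1_def)
    qed
  qed
  have c2: "compact (g2 e ` {0..\<rho>})" if e: "e \<in> I2" for e
  proof (rule lip_compact, intro ballI)
    fix t t' assume tt: "t \<in> {0..\<rho>}" "t' \<in> {0..\<rho>}"
    have eE: "e \<in> E" "snd (ends e) = v" using e unfolding I2_def by auto
    have P1: "0 < t \<Longrightarrow> EPt e (len e - t) \<in> P" "0 < t' \<Longrightarrow> EPt e (len e - t') \<in> P"
      using tt le1(2)[OF e] eE by (auto intro!: EPt_P)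
    show "dist (g2 e t) (g2 e t') \<le> \<bar>t - t'\<bar>"
    proof (cases "t = 0"; cases "t' = 0")
      assume "t = 0" "t' = 0" then show ?thesis by (simp add: g2_def)
    next
      assume "t = 0" "t' \<noteq> 0"
      then show ?thesis using iso[OF VP P1(2)] gd_snd_le[of e "len e - t'"] tt eE by (simp add: g2_def)
    next
      assume "t \<noteq> 0" "t' = 0"
      then show ?thesis using iso[OF VP P1(1)] gd_snd_le[of e "len e - t"] tt eE by (simp add: g2_def dist_commute)
    next
      assume "t \<noteq> 0" "t' \<noteq> 0"
      then have A: "dist (g2 e t) (g2 e t') = gd (EPt e (len e - t)) (EPt e (len e - t'))"
        using iso[OF P1] tt by (simp add: g2_def del: gdist.simps)
      have B: "\<bar>len e - t - (len e - t')\<bar> = \<bar>t - t'\<bar>" by (simp add: abs_minus_commute)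
      show ?thesis using A gd_same_le[of e "len e - t" "len e - t'"] B by linarith
    qed
  qed
  define K where "K = {vpt v} \<union> (\<Union>e\<in>I1. g1 e ` {0..\<rho>}) \<union> (\<Union>e\<in>I2. g2 e ` {0..\<rho>})"
  have "compact K" unfolding K_def using c1 c2 fI by (intro compact_Un compact_UN) auto
  then have cl: "closed K" by (rule compact_imp_closed)
  have KP: "K \<subseteq> iota ` P"
  proof -
    have "g1 e t \<in> iota ` P" if "e \<in> I1" "t \<in> {0..\<rho>}" for e t
      using that le1(1)[OF that(1)] VP unfolding g1_def I1_def by (auto intro!: imageI EPt_P)
    moreover have "g2 e t \<in> iota ` P" if "e \<in> I2" "t \<in> {0..\<rho>}" for e t
      using that le1(2)[OF that(1)] VP unfolding g2_def I2_def by (auto intro!: imageI EPt_P)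
    ultimately show ?thesis unfolding K_def using VP by auto
  qed
  have "q \<in> K"
  proof (rule trap[OF cl q \<rho>(1)], intro ballI impI)
    fix x assume x: "x \<in> P" "dist (vpt v) (iota x) < \<rho>"
    then have g: "gd (Vtx v) x < \<rho>" using iso[OF VP x(1)] by simp
    then have "gd (Vtx v) x < mlen v" using \<rho> by simp
    from L6[OF v x(1) this] show "iota x \<in> K"
    proof (elim disjE exE conjE)
      assume "x = Vtx v" then show ?thesis unfolding K_def by simp
    next
      fix e t assume h: "x = EPt e t" "e \<in> E" "0 < t" "t < len e" "fst (ends e) = v" "t = gd (Vtx v) x"
      then have "e \<in> I1" "t \<in> {0..\<rho>}" "iota x = g1 e t" using g unfolding I1_def g1_def by auto
      then show ?thesis unfolding K_def by blast
    next
      fix e t assume h: "x = EPt e t" "e \<in> E" "0 < t" "t < len e" "snd (ends e) = v" "len e - t = gd (Vtx v) x"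
      have "e \<in> I2" using h unfolding I2_def by auto
      moreover have "len e - t \<in> {0..\<rho>}" using h g by auto
      moreover have "iota x = g2 e (len e - t)" using h(1,4) unfolding g2_def by simp
      ultimately
      show ?thesis unfolding K_def by blast
    qed
  qed
  then show ?thesis using KP by blast
qed

lemma C5a:
  assumes p: "p \<in> Gbar" "p \<notin> iota ` P" and e: "e \<in> E"
  shows "\<exists>\<delta>>0. \<forall>t. 0 < t \<and> t < len e \<longrightarrow> \<delta> \<le> dist p (ept e t)"
proof -
  define g where "g t = (if t \<le> 0 then vpt (fst (ends e)) else if len e \<le> t then vpt (snd (ends e)) else ept e t)" for t
  have VP: "Vtx (fst (ends e)) \<in> P" "Vtx (snd (ends e)) \<in> P" using e by (auto intro!: Vtx_P fst_V snd_V)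
  have lp: "len e > 0" using e by (rule len_pos)
  have "compact (g ` {0..len e})"
  proof (rule lip_compact, intro ballI)
    fix t t' assume tt: "t \<in> {0..len e}" "t' \<in> {0..len e}"
    have P1: "0 < t \<Longrightarrow> t < len e \<Longrightarrow> EPt e t \<in> P" "0 < t' \<Longrightarrow> t' < len e \<Longrightarrow> EPt e t' \<in> P"
      using e by (auto intro!: EPt_P)
    have d0: "dist (vpt (fst (ends e))) (vpt (snd (ends e))) \<le> len e"
      using iso[OF VP] vd_edge[OF e] by simp
    have h0: "dist (vpt (fst (ends e))) (ept e b) \<le> b" if "0 < b" "b < len e" for b
      using gd_fst_le[of e b] that e by (simp add: EPt_P iso VP)
    have hL: "dist (vpt (snd (ends e))) (ept e b) \<le> len e - b" if "0 < b" "b < len e" for b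
      using gd_snd_le[of e b] that e by (simp add: EPt_P iso VP)
    have hI: "dist (ept e a) (ept e b) \<le> \<bar>a - b\<bar>" if "0 < b" "b < len e" "0 < a" "a < len e" for a b
      using gd_same_le[of e a b] that e by (simp add: EPt_P iso VP)
    have key: "dist (g a) (g b) \<le> b - a" if "a \<in> {0..len e}" "b \<in> {0..len e}" "a \<le> b" for a b
    proof -
      have h: "0 \<le> a" "a \<le> len e" "0 \<le> b" "b \<le> len e" "a \<le> b" using that by auto
      consider "a = 0" "b = 0" | "a = 0" "0 < b" "b < len e" | "a = 0" "b = len e"
        | "0 < a" "a < len e" "b < len e" | "0 < a" "a < len e" "b = len e" | "a = len e" "b = len e"
        using h by (smt (verit))
      then show ?thesis
      proof cases
        case 1 then show ?thesis by simp
      next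
        case 2 then show ?thesis using h0[of b] by (simp add: g_def)
      next
        case 3 then show ?thesis using d0 lp by (simp add: g_def)
      next
        case 4 then show ?thesis using hI[of b a] that by (simp add: g_def dist_commute)
      next
        case 5 then show ?thesis using hL[of a] lp by (simp add: g_def dist_commute)
      next
        case 6 then show ?thesis by simp
      qed
    qed
    show "dist (g t) (g t') \<le> \<bar>t - t'\<bar>"
    proof (cases "t \<le> t'")
      case True then show ?thesis using key[OF tt True] by simp
    next
      case False then show ?thesis using key[OF tt(2) tt(1)] by (simp add: dist_commute)
    qed
  qed
  then have cl: "closed (g ` {0..len e})" by (rule compact_imp_closed)
  have sub: "g ` {0..len e} \<subseteq> iota ` P" using VP e by (auto simp: g_def intro!: imageI EPt_P)
  have "p \<in> - (g ` {0..len e})" using p sub by auto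
  then obtain \<delta> where d: "\<delta> > 0" "ball p \<delta> \<subseteq> - (g ` {0..len e})"
    using cl open_contains_ball_eq[of "- (g ` {0..len e})" p] by auto
  have "\<delta> \<le> dist p (ept e t)" if "0 < t" "t < len e" for t
  proof -
    have "ept e t \<in> g ` {0..len e}" using that by (auto simp: g_def image_iff intro!: bexI[of _ t])
    then show ?thesis using d by (auto simp: subset_eq not_less)
  qed
  then show ?thesis using d by auto
qed

lemma C5b:
  assumes p: "p \<in> Gbar" "p \<notin> iota ` P" and e: "e \<in> E" "0 < t" "t < len e"
  shows "min (t + dist (vpt (fst (ends e))) p) (len e - t + dist (vpt (snd (ends e))) p) \<le> dist (ept e t) p"
proof -
  obtain \<delta> where d: "\<delta> > 0" "\<forall>t. 0 < t \<and> t < len e \<longrightarrow> \<delta> \<le> dist p (ept e t)"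
    using C5a[OF p e(1)] by blast
  define H where "H = {y. min (t + dist (vpt (fst (ends e))) y) (len e - t + dist (vpt (snd (ends e))) y) \<le> dist (ept e t) y}"
  have cl: "closed H" unfolding H_def by (intro closed_Collect_le continuous_intros)
  have VP: "Vtx (fst (ends e)) \<in> P" "Vtx (snd (ends e)) \<in> P" using e by (auto intro!: Vtx_P fst_V snd_V)
  have EP: "EPt e t \<in> P" using e by (auto intro!: EPt_P)
  have "p \<in> H"
  proof (rule trap[OF cl p(1)])
    show "dist p p < \<delta>" using d by simp
    show "\<forall>x\<in>P. dist p (iota x) < \<delta> \<longrightarrow> iota x \<in> H"
    proof (intro ballI impI)
      fix x assume x: "x \<in> P" "dist p (iota x) < \<delta>"
      have ne: "\<forall>t'. x \<noteq> EPt e t'"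
      proof (intro allI notI)
        fix t' assume "x = EPt e t'"
        then have "0 < t'" "t' < len e" using x(1) unfolding gpoints_def by auto
        then show False using d \<open>x = EPt e t'\<close> x by force
      qed
      show "iota x \<in> H" using L7[OF e x(1) ne] unfolding H_def by (simp add: iso VP EP x)
    qed
  qed
  then show ?thesis unfolding H_def by simp
qed

lemma FL:
  assumes d: "d > 0"
  shows "finite {e\<in>E. d \<le> len e}"
proof (rule ccontr)
  define S where "S = {e\<in>E. d \<le> len e}"
  assume "infinite {e\<in>E. d \<le> len e}"
  then have inf: "infinite S" unfolding S_def .
  define m where "m e = ept e (len e / 2)" for e
  have mP: "e \<in> S \<Longrightarrow> EPt e (len e / 2) \<in> P" for e using len_pos unfolding S_def by (auto intro!: EPt_P)
  have sep: "d / 2 \<le> dist (m e) (m f)" if "e \<in> S" "f \<in> S" "e \<noteq> f" for e f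
    using mid_sep[of e f] that iso[OF mP mP] unfolding m_def S_def by fastforce
  have "inj_on m S"
    using sep d by (intro inj_onI) (metis dist_self half_gt_zero_iff linorder_not_le)
  then have "infinite (m ` S)" using inf finite_imageD by blast
  moreover have "m ` S \<subseteq> Gbar" using iP_sub mP unfolding m_def by auto
  ultimately obtain z where z: "z \<in> Gbar" "z islimpt (m ` S)"
    using cpt unfolding compact_eq_Bolzano_Weierstrass by blast
  obtain y1 where y1: "y1 \<in> m ` S" "y1 \<noteq> z" "dist y1 z < d / 4"
    using z(2) d unfolding islimpt_approachable by (metis zero_less_divide_iff zero_less_numeral)
  obtain y2 where y2: "y2 \<in> m ` S" "y2 \<noteq> z" "dist y2 z < min (d / 4) (dist y1 z)"
    using z(2) d y1(2) unfolding islimpt_approachable by (metis min_less_iff_conj zero_less_dist_iff zero_less_divide_iff zero_less_numeral)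
  have "y1 \<noteq> y2" using y2 by auto
  then obtain e f where "e \<in> S" "f \<in> S" "e \<noteq> f" "y1 = m e" "y2 = m f" using y1 y2 by blast
  then have "d / 2 \<le> dist y1 y2" using sep by auto
  moreover have "dist y1 y2 \<le> dist y1 z + dist y2 z" by (rule dist_triangle2)
  ultimately show False using y1 y2 by linarith
qed

end


lemma deriv_funpow_cong:
  assumes "open S" "\<forall>x\<in>S. f x = g x" "x \<in> S"
  shows "(deriv^^n) f x = (deriv^^n) g x"
  using assms(3)
proof (induction n arbitrary: x)
  case 0
  then show ?case using assms by simp
next
  case (Suc n)
  have "eventually (\<lambda>y. y \<in> S) (nhds x)" using assms(1) Suc.prems by (rule eventually_nhds_in_open)
  then have "eventually (\<lambda>y. (deriv^^n) f y = (deriv^^n) g y) (nhds x)"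
    by (rule eventually_mono) (use Suc.IH in auto)
  then show ?case by (simp add: deriv_cong_ev)
qed

lemma smooth_on_cong:
  assumes "open S" "\<forall>x\<in>S. f x = g x" "gsmooth g"
  shows "smooth_on f S"
  unfolding smooth_on_def
proof (intro allI ballI)
  fix n t assume t: "t \<in> S"
  have "(deriv^^n) g differentiable (at t)" using assms(3) unfolding gsmooth_def Cn_def by blast
  then have d: "DERIV ((deriv^^n) g) t :> deriv ((deriv^^n) g) t" by (rule diffD)
  have "eventually (\<lambda>y. y \<in> S) (nhds t)" using assms(1) t by (rule eventually_nhds_in_open)
  then have "eventually (\<lambda>y. (deriv^^n) f y = (deriv^^n) g y) (nhds t)"
    by (rule eventually_mono) (use deriv_funpow_cong[OF assms(1,2)] in auto)
  then have "DERIV ((deriv^^n) f) t :> deriv ((deriv^^n) g) t"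
    using d by (subst DERIV_cong_ev[OF refl _ refl]) auto
  then show "(deriv^^n) f differentiable (at t)" by (rule diffI)
qed

lemma deriv_const_on:
  assumes "open S" "\<forall>x\<in>S. f x = k" "x \<in> S"
  shows "deriv f x = 0"
  using deriv_funpow_cong[OF assms(1) _ assms(3), of f "\<lambda>_. k" 1] assms(2) by simp

lemma gsmooth_const: "gsmooth (\<lambda>x. c)"
  by (simp add: gsmooth_def Cn_const)
lemma gsmooth_add: "gsmooth f \<Longrightarrow> gsmooth g \<Longrightarrow> gsmooth (\<lambda>x. f x + g x)"
  by (simp add: gsmooth_def Cn_add)
lemma gsmooth_mult: "gsmooth f \<Longrightarrow> gsmooth g \<Longrightarrow> gsmooth (\<lambda>x. f x * g x)"
  by (simp add: gsmooth_def Cn_mult)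
lemma gsmooth_affine: "gsmooth f \<Longrightarrow> gsmooth (\<lambda>x. f (a * x + b))"
  by (simp add: gsmooth_def Cn_affine)
lemma gsmooth_inverse: "gsmooth f \<Longrightarrow> \<forall>x. f x \<noteq> 0 \<Longrightarrow> gsmooth (\<lambda>x. inverse (f x))"
  by (simp add: gsmooth_def Cn_inverse)
lemma gsmooth_cont: "gsmooth f \<Longrightarrow> isCont f x"
  by (simp add: gsmooth_def Cn_diff differentiable_imp_continuous_within)

definition bump :: "real \<Rightarrow> real \<Rightarrow> real \<Rightarrow> real" where
  "bump a b t = flat (t - a) * flat (b - t)"

definition step :: "real \<Rightarrow> real \<Rightarrow> real \<Rightarrow> real" where
  "step a b t = flat (t - a) * inverse (flat (t - a) + flat (b - t))"

lemma bump_smooth: "gsmooth (bump a b)"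
proof -
  have "gsmooth (\<lambda>t. flat (1 * t + (- a)))" "gsmooth (\<lambda>t. flat ((-1) * t + b))"
    using flat_smooth by (intro gsmooth_affine; simp)+
  then show ?thesis unfolding bump_def by (simp add: gsmooth_mult)
qed

lemma bump_out: "t \<le> a \<or> b \<le> t \<Longrightarrow> bump a b t = 0"
  by (auto simp: bump_def flat_zero)

lemma bump_in: "a < t \<Longrightarrow> t < b \<Longrightarrow> 0 < bump a b t"
  by (auto simp: bump_def flat_pos)

lemma step_smooth: "a < b \<Longrightarrow> gsmooth (step a b)"
proof -
  assume ab: "a < b"
  have s1: "gsmooth (\<lambda>t. flat (1 * t + (- a)))" "gsmooth (\<lambda>t. flat ((-1) * t + b))"
    using flat_smooth by (intro gsmooth_affine; simp)+
  have nz: "\<forall>t. flat (t - a) + flat (b - t) \<noteq> 0"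
  proof
    fix t
    have "0 < flat (t - a) + flat (b - t)"
    proof (cases "a < t")
      case True then show ?thesis using flat_pos[of "t - a"] flat_nonneg[of "b - t"] by simp
    next
      case False then show ?thesis using ab flat_pos[of "b - t"] flat_nonneg[of "t - a"] by simp
    qed
    then show "flat (t - a) + flat (b - t) \<noteq> 0" by simp
  qed
  have "gsmooth (\<lambda>t. flat (t - a) + flat (b - t))" using s1 by (simp add: gsmooth_add)
  then have "gsmooth (\<lambda>t. inverse (flat (t - a) + flat (b - t)))" using nz by (rule gsmooth_inverse)
  then show ?thesis using s1 unfolding step_def by (simp add: gsmooth_mult)
qed

lemma step_le: "t \<le> a \<Longrightarrow> step a b t = 0"
  by (simp add: step_def flat_zero)

lemma step_ge: assumes "a < b" "b \<le> t" shows "step a b t = 1"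
proof -
  have "0 < flat (t - a)" using assms by (intro flat_pos) simp
  then show ?thesis using assms by (simp add: step_def flat_zero)
qed


context MGC begin

definition EI where "EI = {EPt e t |e t. e \<in> E \<and> 0 < t \<and> t < len e}"
definition NN where "NN = Gbar - iota ` EI"

lemma EI_P: "EI \<subseteq> P" unfolding EI_def gpoints_def by auto

lemma inj_EI: "inj_on iota EI"
  using EI_P iota_inj by (intro inj_onI) auto

lemma ept_EI: "e \<in> E \<Longrightarrow> 0 < t \<Longrightarrow> t < len e \<Longrightarrow> ept e t \<in> iota ` EI"
  unfolding EI_def by auto

lemma iEI_E: "p \<in> iota ` EI \<Longrightarrow> \<exists>e t. e \<in> E \<and> 0 < t \<and> t < len e \<and> p = ept e t"
  unfolding EI_def by auto

lemma vpt_NN: "v \<in> V \<Longrightarrow> vpt v \<in> NN"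
proof -
  assume v: "v \<in> V"
  have "vpt v \<in> Gbar" using iP_sub Vtx_P[OF v] by auto
  moreover have "vpt v \<notin> iota ` EI"
  proof
    assume "vpt v \<in> iota ` EI"
    then obtain x where "x \<in> EI" "vpt v = iota x" by auto
    then show False using iota_inj[of "Vtx v" x] Vtx_P[OF v] EI_P unfolding EI_def by auto
  qed
  ultimately show ?thesis unfolding NN_def by simp
qed

lemma ideal_NN: "p \<in> Gbar \<Longrightarrow> p \<notin> iota ` P \<Longrightarrow> p \<in> NN"
  using EI_P unfolding NN_def by auto

lemma NN_cases:
  assumes "p \<in> NN"
  obtains v where "v \<in> V" "p = vpt v" | "p \<in> Gbar" "p \<notin> iota ` P"
proof -
  have "p \<in> Gbar" "p \<notin> iota ` EI" using assms unfolding NN_def by auto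
  then show ?thesis using that unfolding EI_def gpoints_def by blast
qed

definition Phi :: "('p \<Rightarrow> real) \<Rightarrow> 'e set \<Rightarrow> ('e \<Rightarrow> real \<Rightarrow> real) \<Rightarrow> 'p \<Rightarrow> real" where
  "Phi c F f p = (if p \<in> iota ` EI then
      (case inv_into EI iota p of EPt e t \<Rightarrow> (if e \<in> F then f e t else c (vpt (fst (ends e)))) | Vtx v \<Rightarrow> 0)
     else c p)"

lemma Phi_ept: "e \<in> E \<Longrightarrow> 0 < t \<Longrightarrow> t < len e \<Longrightarrow>
    Phi c F f (ept e t) = (if e \<in> F then f e t else c (vpt (fst (ends e))))"
proof -
  assume "e \<in> E" "0 < t" "t < len e"
  then have x: "EPt e t \<in> EI" unfolding EI_def by auto
  then have "inv_into EI iota (ept e t) = EPt e t" by (rule inv_into_f_f[OF inj_EI])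
  moreover have "ept e t \<in> iota ` EI" using x by blast
  ultimately show ?thesis unfolding Phi_def by simp
qed

lemma Phi_out: "p \<notin> iota ` EI \<Longrightarrow> Phi c F f p = c p"
  unfolding Phi_def by simp

definition good :: "('p \<Rightarrow> real) \<Rightarrow> 'e set \<Rightarrow> ('e \<Rightarrow> real \<Rightarrow> real) \<Rightarrow> bool" where
  "good c F f \<longleftrightarrow> continuous_on NN c \<and> F \<subseteq> E \<and> finite F \<and> (\<forall>e\<in>F. gsmooth (f e)) \<and>
     (\<forall>e\<in>F. \<exists>a b. 0 < a \<and> b < len e \<and> (\<forall>t\<le>a. f e t = c (vpt (fst (ends e)))) \<and>
                  (\<forall>t\<ge>b. f e t = c (vpt (snd (ends e))))) \<and>
     (\<forall>e\<in>E - F. c (vpt (fst (ends e))) = c (vpt (snd (ends e))))"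


context
  fixes c F f assumes gdd: "good c F f"
begin

lemma g_cont: "continuous_on NN c" and g_F: "F \<subseteq> E" "finite F" and g_sm: "\<And>e. e \<in> F \<Longrightarrow> gsmooth (f e)"
  and g_eq: "\<And>e. e \<in> E \<Longrightarrow> e \<notin> F \<Longrightarrow> c (vpt (fst (ends e))) = c (vpt (snd (ends e)))"
  using gdd unfolding good_def by auto

lemma g_AB: "\<exists>A B. \<forall>e\<in>F. 0 < A e \<and> B e < len e \<and> (\<forall>t\<le>A e. f e t = c (vpt (fst (ends e)))) \<and>
                  (\<forall>t\<ge>B e. f e t = c (vpt (snd (ends e))))"
proof -
  have "\<forall>e\<in>F. \<exists>ab. 0 < fst ab \<and> snd ab < len e \<and> (\<forall>t\<le>fst ab. f e t = c (vpt (fst (ends e)))) \<and>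
                  (\<forall>t\<ge>snd ab. f e t = c (vpt (snd (ends e))))"
    using gdd unfolding good_def by force
  then obtain ab where "\<forall>e\<in>F. 0 < fst (ab e) \<and> snd (ab e) < len e \<and> (\<forall>t\<le>fst (ab e). f e t = c (vpt (fst (ends e)))) \<and>
                  (\<forall>t\<ge>snd (ab e). f e t = c (vpt (snd (ends e))))"
    by (metis bchoice)
  then show ?thesis by (intro exI[of _ "\<lambda>e. fst (ab e)"] exI[of _ "\<lambda>e. snd (ab e)"]) auto
qed

definition hf :: "'e \<Rightarrow> real \<Rightarrow> real" where
  "hf e = (if e \<in> F then f e else (\<lambda>_. c (vpt (fst (ends e)))))"

lemma hf_smooth: "gsmooth (hf e)"
  unfolding hf_def using g_sm gsmooth_const by auto

lemma Phi_ept': "e \<in> E \<Longrightarrow> 0 < t \<Longrightarrow> t < len e \<Longrightarrow> Phi c F f (ept e t) = hf e t"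
  by (simp add: Phi_ept hf_def)

lemma cont_edge:
  assumes e: "e \<in> E" "0 < s" "s < len e"
  shows "continuous (at (ept e s) within Gbar) (Phi c F f)"
  unfolding continuous_within_eps_delta
proof (intro allI impI)
  fix \<epsilon> :: real assume \<epsilon>: "\<epsilon> > 0"
  have "isCont (hf e) s" using hf_smooth by (rule gsmooth_cont)
  then obtain d1 where d1: "d1 > 0" "\<forall>x. dist x s < d1 \<longrightarrow> dist (hf e x) (hf e s) < \<epsilon>"
    using \<epsilon> unfolding continuous_at_eps_delta by blast
  define d where "d = min d1 (min s (len e - s))"
  have "d > 0" using d1 e unfolding d_def by auto
  moreover have "dist (Phi c F f q) (Phi c F f (ept e s)) < \<epsilon>" if q: "q \<in> Gbar" "dist q (ept e s) < d" for q
  proof -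
    have "dist (ept e s) q < min s (len e - s)" using q unfolding d_def by (simp add: dist_commute)
    then obtain t where t: "0 < t" "t < len e" "q = ept e t" "dist (ept e s) q = \<bar>s - t\<bar>"
      using C3[OF e q(1)] by blast
    have "dist t s < d1" using t q unfolding d_def by (simp add: dist_real_def dist_commute abs_minus_commute)
    then show ?thesis using d1 t e by (simp add: Phi_ept')
  qed
  ultimately show "\<exists>d>0. \<forall>x'\<in>Gbar. dist x' (ept e s) < d \<longrightarrow> dist (Phi c F f x') (Phi c F f (ept e s)) < \<epsilon>"
    by blast
qed

lemma marg_ex: "\<exists>m>0. \<forall>v\<in>V. \<forall>e\<in>E. \<forall>t. 0 < t \<and> t < len e \<and> gd (Vtx v) (EPt e t) < min (mlen v) m \<longrightarrow>
      (\<exists>S. open S \<and> t \<in> S \<and> S \<subseteq> {0<..<len e} \<and> (\<forall>y\<in>S. hf e y = c (vpt v)))"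
proof -
  obtain A B where AB: "\<forall>e\<in>F. 0 < A e \<and> B e < len e \<and> (\<forall>t\<le>A e. f e t = c (vpt (fst (ends e)))) \<and>
                  (\<forall>t\<ge>B e. f e t = c (vpt (snd (ends e))))" using g_AB by blast
  define m where "m = Min (insert 1 ((\<lambda>e. min (A e) (len e - B e)) ` F))"
  have m: "m > 0" unfolding m_def using g_F AB by (subst Min_gr_iff) auto
  have mF: "e \<in> F \<Longrightarrow> m \<le> A e \<and> m \<le> len e - B e" for e
    unfolding m_def using g_F by (auto intro: Min.coboundedI[THEN order.trans])
  have "\<forall>v\<in>V. \<forall>e\<in>E. \<forall>t. 0 < t \<and> t < len e \<and> gd (Vtx v) (EPt e t) < min (mlen v) m \<longrightarrow>
      (\<exists>S. open S \<and> t \<in> S \<and> S \<subseteq> {0<..<len e} \<and> (\<forall>y\<in>S. hf e y = c (vpt v)))"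
  proof (intro ballI allI impI, elim conjE)
    fix v e t assume v: "v \<in> V" and e: "e \<in> E" and t: "0 < t" "t < len e"
      and lt: "gd (Vtx v) (EPt e t) < min (mlen v) m"
    have x: "EPt e t \<in> P" using e t by (rule EPt_P)
    have L: "(fst (ends e) = v \<and> t = gd (Vtx v) (EPt e t)) \<or> (snd (ends e) = v \<and> len e - t = gd (Vtx v) (EPt e t))"
      using L6[OF v x] lt by auto
    show "\<exists>S. open S \<and> t \<in> S \<and> S \<subseteq> {0<..<len e} \<and> (\<forall>y\<in>S. hf e y = c (vpt v))"
    proof (cases "e \<in> F")
      case False
      have "\<forall>y\<in>{0<..<len e}. hf e y = c (vpt v)"
        using L g_eq[OF e False] False unfolding hf_def by auto
      then show ?thesis using t by (intro exI[of _ "{0<..<len e}"]) auto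
    next
      case True
      note ABe = AB[rule_format, OF True]
      from L show ?thesis
      proof (elim disjE conjE)
        assume h: "fst (ends e) = v" "t = gd (Vtx v) (EPt e t)"
        then have "t < A e" using lt mF[OF True] by linarith
        moreover have "\<forall>y\<in>{0<..<min (A e) (len e)}. hf e y = c (vpt v)" using ABe h True unfolding hf_def by auto
        ultimately show ?thesis using t ABe by (intro exI[of _ "{0<..<min (A e) (len e)}"]) auto
      next
        assume h: "snd (ends e) = v" "len e - t = gd (Vtx v) (EPt e t)"
        then have "B e < t" using lt mF[OF True] by linarith
        moreover have "\<forall>y\<in>{max (B e) 0<..<len e}. hf e y = c (vpt v)" using ABe h True unfolding hf_def by auto
        ultimately show ?thesis using t ABe by (intro exI[of _ "{max (B e) 0<..<len e}"]) auto
      qed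
    qed
  qed
  then show ?thesis using m by blast
qed

lemma vertex_const:
  assumes v: "v \<in> V"
  shows "\<exists>r>0. \<forall>q\<in>Gbar. dist (vpt v) q < r \<longrightarrow> Phi c F f q = Phi c F f (vpt v)"
proof -
  obtain m where m: "m > 0" "\<forall>v\<in>V. \<forall>e\<in>E. \<forall>t. 0 < t \<and> t < len e \<and> gd (Vtx v) (EPt e t) < min (mlen v) m \<longrightarrow>
      (\<exists>S. open S \<and> t \<in> S \<and> S \<subseteq> {0<..<len e} \<and> (\<forall>y\<in>S. hf e y = c (vpt v)))" using marg_ex by blast
  have pv: "Phi c F f (vpt v) = c (vpt v)" using vpt_NN[OF v] unfolding NN_def by (simp add: Phi_out)
  have "Phi c F f q = c (vpt v)" if q: "q \<in> Gbar" "dist (vpt v) q < min (mlen v) m" for q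
  proof -
    obtain x where x: "x \<in> P" "q = iota x" using C4[OF v q(1)] q by auto
    have g: "gd (Vtx v) x < min (mlen v) m" using q x iso[OF Vtx_P[OF v] x(1)] by simp
    show ?thesis
    proof (rule gpointsE[OF x(1)])
      fix w assume w: "x = Vtx w" "w \<in> V"
      then have "w = v" using L6[OF v x(1)] g by auto
      then show ?thesis using x w pv by simp
    next
      fix e t assume et: "x = EPt e t" "e \<in> E" "0 < t" "t < len e"
      then obtain S where "t \<in> S" "\<forall>y\<in>S. hf e y = c (vpt v)" using m(2) v g by blast
      then show ?thesis using et x by (simp add: Phi_ept')
    qed
  qed
  then show ?thesis using m mlen_pos[OF v] pv by (intro exI[of _ "min (mlen v) m"]) auto
qed

lemma cont_vertex:
  assumes v: "v \<in> V"
  shows "continuous (at (vpt v) within Gbar) (Phi c F f)"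
  unfolding continuous_within_eps_delta
proof (intro allI impI)
  fix \<epsilon> :: real assume "\<epsilon> > 0"
  obtain r where "r > 0" "\<forall>q\<in>Gbar. dist (vpt v) q < r \<longrightarrow> Phi c F f q = Phi c F f (vpt v)"
    using vertex_const[OF v] by blast
  then show "\<exists>d>0. \<forall>x'\<in>Gbar. dist x' (vpt v) < d \<longrightarrow> dist (Phi c F f x') (Phi c F f (vpt v)) < \<epsilon>"
    using \<open>\<epsilon> > 0\<close> by (intro exI[of _ r]) (auto simp: dist_commute)
qed

lemma cont_ideal:
  assumes p: "p \<in> Gbar" "p \<notin> iota ` P"
  shows "continuous (at p within Gbar) (Phi c F f)"
  unfolding continuous_within_eps_delta
proof (intro allI impI)
  fix \<epsilon> :: real assume \<epsilon>: "\<epsilon> > 0"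
  have pN: "p \<in> NN" using p by (rule ideal_NN)
  obtain dc where dc: "dc > 0" "\<forall>x'\<in>NN. dist x' p < dc \<longrightarrow> dist (c x') (c p) < \<epsilon>"
    using g_cont pN \<epsilon> unfolding continuous_on_iff by blast
  have "\<forall>e\<in>F. \<exists>\<delta>>0. \<forall>t. 0 < t \<and> t < len e \<longrightarrow> \<delta> \<le> dist p (ept e t)"
    using C5a[OF p] g_F by blast
  then obtain \<delta> where \<delta>: "\<forall>e\<in>F. \<delta> e > 0 \<and> (\<forall>t. 0 < t \<and> t < len e \<longrightarrow> \<delta> e \<le> dist p (ept e t))"
    by (metis bchoice)
  define d where "d = Min (insert dc (\<delta> ` F))"
  have d: "d > 0" unfolding d_def using g_F \<delta> dc by (subst Min_gr_iff) auto
  have dF: "e \<in> F \<Longrightarrow> d \<le> \<delta> e" for e unfolding d_def using g_F by auto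
  have ddc: "d \<le> dc" unfolding d_def using g_F by auto
  have pv: "Phi c F f p = c p" using pN unfolding NN_def by (simp add: Phi_out)
  have "dist (Phi c F f q) (Phi c F f p) < \<epsilon>" if q: "q \<in> Gbar" "dist q p < d" for q
  proof (cases "q \<in> iota ` EI")
    case False
    then have "q \<in> NN" using q unfolding NN_def by auto
    then show ?thesis using dc q ddc False pv by (simp add: Phi_out)
  next
    case True
    then obtain e t where et: "e \<in> E" "0 < t" "t < len e" "q = ept e t" using iEI_E by blast
    have nF: "e \<notin> F"
    proof
      assume "e \<in> F"
      then have "d \<le> dist p q" using dF \<delta> et by fastforce
      then show False using q by (simp add: dist_commute)
    qed
    have mm: "min (t + dist (vpt (fst (ends e))) p) (len e - t + dist (vpt (snd (ends e))) p) < d"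
      using C5b[OF p et(1-3)] q et by simp
    have "\<exists>w\<in>{fst (ends e), snd (ends e)}. dist (vpt w) p < dc"
      using mm et ddc by (auto simp: min_def split: if_splits)
    then obtain w where w: "w \<in> {fst (ends e), snd (ends e)}" "dist (vpt w) p < dc" by blast
    have "vpt w \<in> NN" using w et by (auto intro!: vpt_NN fst_V snd_V)
    then have "dist (c (vpt w)) (c p) < \<epsilon>" using dc w by blast
    moreover have "Phi c F f q = c (vpt w)" using et nF g_eq[OF et(1) nF] w by (auto simp: Phi_ept)
    ultimately show ?thesis using pv by simp
  qed
  then show "\<exists>d>0. \<forall>x'\<in>Gbar. dist x' p < d \<longrightarrow> dist (Phi c F f x') (Phi c F f p) < \<epsilon>"
    using d by blast
qed

lemma Phi_cont: "continuous_on Gbar (Phi c F f)"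
proof (rule continuous_on_eq_continuous_within[THEN iffD2], intro ballI)
  fix p assume p: "p \<in> Gbar"
  show "continuous (at p within Gbar) (Phi c F f)"
  proof (cases "p \<in> iota ` P")
    case False then show ?thesis by (intro cont_ideal p)
  next
    case True
    then obtain x where x: "x \<in> P" "p = iota x" by auto
    show ?thesis
    proof (rule gpointsE[OF x(1)])
      fix v assume "x = Vtx v" "v \<in> V" then show ?thesis using x cont_vertex by simp
    next
      fix e t assume "x = EPt e t" "e \<in> E" "0 < t" "t < len e" then show ?thesis using x cont_edge by simp
    qed
  qed
qed

lemma edge_fun_eq: "e \<in> E \<Longrightarrow> \<forall>t\<in>{0<..<len e}. edge_fun iota (Phi c F f) e t = hf e t"
  by (simp add: edge_fun_def Phi_ept')

lemma GL: "Phi c F f \<in> algebraA V E ends len iota Gbar"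
  unfolding algebraA_def
proof (intro CollectI conjI ballI)
  show "continuous_on Gbar (Phi c F f)" by (rule Phi_cont)
next
  fix e assume e: "e \<in> E"
  show "smooth_on (edge_fun iota (Phi c F f) e) {0<..<len e}"
    using edge_fun_eq[OF e] hf_smooth by (intro smooth_on_cong) auto
next
  show "\<exists>F'. finite F' \<and> F' \<subseteq> E \<and> (\<forall>e\<in>E - F'. \<forall>t\<in>{0<..<len e}. deriv (edge_fun iota (Phi c F f) e) t = 0)"
  proof (intro exI[of _ F] conjI ballI)
    fix e t assume e: "e \<in> E - F" and t: "t \<in> {0<..<len e}"
    have "\<forall>y\<in>{0<..<len e}. edge_fun iota (Phi c F f) e y = c (vpt (fst (ends e)))"
      using edge_fun_eq[of e] e unfolding hf_def by auto
    then show "deriv (edge_fun iota (Phi c F f) e) t = 0" using t by (intro deriv_const_on) auto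
  qed (use g_F in auto)
next
  fix v assume v: "v \<in> V"
  obtain m where m: "m > 0" "\<forall>v\<in>V. \<forall>e\<in>E. \<forall>t. 0 < t \<and> t < len e \<and> gd (Vtx v) (EPt e t) < min (mlen v) m \<longrightarrow>
      (\<exists>S. open S \<and> t \<in> S \<and> S \<subseteq> {0<..<len e} \<and> (\<forall>y\<in>S. hf e y = c (vpt v)))" using marg_ex by blast
  show "\<exists>r>0. \<forall>e\<in>E. \<forall>t\<in>{0<..<len e}. gd (Vtx v) (EPt e t) < r \<longrightarrow> deriv (edge_fun iota (Phi c F f) e) t = 0"
  proof (intro exI[of _ "min (mlen v) m"] conjI ballI impI)
    show "0 < min (mlen v) m" using m mlen_pos[OF v] by simp
  next
    fix e t assume e: "e \<in> E" and t: "t \<in> {0<..<len e}" and lt: "gd (Vtx v) (EPt e t) < min (mlen v) m"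
    then obtain S where S: "open S" "t \<in> S" "S \<subseteq> {0<..<len e}" "\<forall>y\<in>S. hf e y = c (vpt v)"
      using m(2) v by force
    have "\<forall>y\<in>S. edge_fun iota (Phi c F f) e y = c (vpt v)" using S edge_fun_eq[OF e] by auto
    then show "deriv (edge_fun iota (Phi c F f) e) t = 0" using S by (intro deriv_const_on) auto
  qed
qed

end

end


context MGC begin

definition ext :: "('p \<Rightarrow> real) \<Rightarrow> 'e set \<Rightarrow> ('e \<Rightarrow> real \<Rightarrow> real) \<Rightarrow> 'e \<Rightarrow> real \<Rightarrow> real" where
  "ext c F f e = (if e \<in> F then f e else (\<lambda>_. c (vpt (fst (ends e)))))"

lemma ext_AB:
  assumes g: "good c F f" and e: "e \<in> E"
  shows "\<exists>a b. 0 < a \<and> b < len e \<and> (\<forall>t\<le>a. ext c F f e t = c (vpt (fst (ends e)))) \<and>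
                  (\<forall>t\<ge>b. ext c F f e t = c (vpt (snd (ends e))))"
proof (cases "e \<in> F")
  case True
  then show ?thesis using g unfolding good_def ext_def by auto
next
  case False
  then show ?thesis using g e len_pos[OF e] unfolding good_def ext_def
    by (intro exI[of _ "len e / 2"]) auto
qed

lemma ext_smooth: "good c F f \<Longrightarrow> gsmooth (ext c F f e)"
  unfolding good_def ext_def using gsmooth_const by auto

lemma Phi_ext: "e \<in> E \<Longrightarrow> 0 < t \<Longrightarrow> t < len e \<Longrightarrow> Phi c F f (ept e t) = ext c F f e t"
  by (simp add: Phi_ept ext_def)

lemma good_op:
  assumes g1: "good c1 F1 f1" and g2: "good c2 F2 f2"
    and sm: "\<And>u w. gsmooth u \<Longrightarrow> gsmooth w \<Longrightarrow> gsmooth (\<lambda>x. op (u x) (w x))"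
    and ct: "\<And>u w. continuous_on NN u \<Longrightarrow> continuous_on NN w \<Longrightarrow> continuous_on NN (\<lambda>x. op (u x) (w x))"
  shows "\<exists>c F f. good c F f \<and> (\<lambda>p. op (Phi c1 F1 f1 p) (Phi c2 F2 f2 p)) = Phi c F f"
proof -
  define c where "c x = op (c1 x) (c2 x)" for x
  define F where "F = F1 \<union> F2"
  define f where "f e t = op (ext c1 F1 f1 e t) (ext c2 F2 f2 e t)" for e t
  have gd: "good c F f"
    unfolding good_def
  proof (intro conjI ballI)
    show "continuous_on NN c" unfolding c_def using g1 g2 ct unfolding good_def by blast
    show "F \<subseteq> E" "finite F" using g1 g2 unfolding good_def F_def by auto
  next
    fix e assume "e \<in> F"
    show "gsmooth (f e)" unfolding f_def using sm ext_smooth[OF g1] ext_smooth[OF g2] by blast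
  next
    fix e assume eF: "e \<in> F"
    then have e: "e \<in> E" using g1 g2 unfolding good_def F_def by auto
    obtain a1 b1 where 1: "0 < a1" "b1 < len e" "\<forall>t\<le>a1. ext c1 F1 f1 e t = c1 (vpt (fst (ends e)))"
       "\<forall>t\<ge>b1. ext c1 F1 f1 e t = c1 (vpt (snd (ends e)))" using ext_AB[OF g1 e] by blast
    obtain a2 b2 where 2: "0 < a2" "b2 < len e" "\<forall>t\<le>a2. ext c2 F2 f2 e t = c2 (vpt (fst (ends e)))"
       "\<forall>t\<ge>b2. ext c2 F2 f2 e t = c2 (vpt (snd (ends e)))" using ext_AB[OF g2 e] by blast
    show "\<exists>a b. 0 < a \<and> b < len e \<and> (\<forall>t\<le>a. f e t = c (vpt (fst (ends e)))) \<and> (\<forall>t\<ge>b. f e t = c (vpt (snd (ends e))))"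
      using 1 2 unfolding f_def c_def by (intro exI[of _ "min a1 a2"] exI[of _ "max b1 b2"]) auto
  next
    fix e assume "e \<in> E - F"
    then show "c (vpt (fst (ends e))) = c (vpt (snd (ends e)))"
      using g1 g2 unfolding good_def F_def c_def by auto
  qed
  have "(\<lambda>p. op (Phi c1 F1 f1 p) (Phi c2 F2 f2 p)) = Phi c F f"
  proof
    fix p
    show "op (Phi c1 F1 f1 p) (Phi c2 F2 f2 p) = Phi c F f p"
    proof (cases "p \<in> iota ` EI")
      case True
      then obtain e t where et: "e \<in> E" "0 < t" "t < len e" "p = ept e t" using iEI_E by blast
      have "ext c F f e t = f e t \<or> (e \<notin> F \<and> ext c F f e t = c (vpt (fst (ends e))))"
        unfolding ext_def by auto
      then have "ext c F f e t = op (ext c1 F1 f1 e t) (ext c2 F2 f2 e t)"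
        unfolding f_def c_def F_def ext_def by auto
      then show ?thesis using et by (simp add: Phi_ext)
    next
      case False
      then show ?thesis by (simp add: Phi_out c_def)
    qed
  qed
  then show ?thesis using gd by blast
qed

lemma good_const: "good (\<lambda>_. k) {} (\<lambda>_ _. 0)"
  unfolding good_def by simp

lemma Phi_const: "Phi (\<lambda>_. k) {} f = (\<lambda>_. k)"
proof
  fix p
  show "Phi (\<lambda>_. k) {} f p = k"
  proof (cases "p \<in> iota ` EI")
    case True
    then obtain e t where "e \<in> E" "0 < t" "t < len e" "p = ept e t" using iEI_E by blast
    then show ?thesis by (simp add: Phi_ept)
  next
    case False then show ?thesis by (simp add: Phi_out)
  qed
qed

lemma sep_edge:
  assumes e: "e \<in> E" "0 < s" "s < len e" and y: "y \<in> Gbar" "y \<noteq> ept e s"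
  shows "\<exists>c F f. good c F f \<and> Phi c F f (ept e s) \<noteq> Phi c F f y"
proof -
  obtain \<delta> where \<delta>: "0 < \<delta>" "\<delta> < s" "s + \<delta> < len e"
    "\<And>t. 0 < t \<Longrightarrow> t < len e \<Longrightarrow> y = ept e t \<Longrightarrow> \<delta> < \<bar>t - s\<bar>"
  proof (cases "\<exists>t. 0 < t \<and> t < len e \<and> y = ept e t")
    case True
    then obtain t0 where t0: "0 < t0" "t0 < len e" "y = ept e t0" by blast
    then have "t0 \<noteq> s" using y by auto
    have u: "t = t0" if "0 < t" "t < len e" "y = ept e t" for t
      using iota_inj[of "EPt e t" "EPt e t0"] that t0 e by (auto simp: EPt_P)
    define m where "m = min (min s (len e - s)) \<bar>t0 - s\<bar>"
    have m: "0 < m" "m \<le> s" "m \<le> len e - s" "m \<le> \<bar>t0 - s\<bar>"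
      using \<open>t0 \<noteq> s\<close> e unfolding m_def by auto
    show ?thesis
    proof (rule that[of "m / 2"])
      show "0 < m / 2" "m / 2 < s" "s + m / 2 < len e" using m by auto
      show "m / 2 < \<bar>t - s\<bar>" if "0 < t" "t < len e" "y = ept e t" for t
        using u[OF that] m by auto
    qed
  next
    case False
    define m where "m = min s (len e - s)"
    have m: "0 < m" "m \<le> s" "m \<le> len e - s" using e unfolding m_def by auto
    show ?thesis
    proof (rule that[of "m / 2"])
      show "0 < m / 2" "m / 2 < s" "s + m / 2 < len e" using m by auto
      show "m / 2 < \<bar>t - s\<bar>" if "0 < t" "t < len e" "y = ept e t" for t
        using False that by auto
    qed
  qed
  define f where "f = (\<lambda>_::'e. bump (s - \<delta>) (s + \<delta>))"
  have ab: "\<exists>a b. 0 < a \<and> b < len e \<and> (\<forall>t\<le>a. bump (s - \<delta>) (s + \<delta>) t = 0) \<and>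
                  (\<forall>t\<ge>b. bump (s - \<delta>) (s + \<delta>) t = 0)"
  proof (intro exI conjI allI impI)
    show "0 < s - \<delta>" "s + \<delta> < len e" using \<delta> by auto
    show "bump (s - \<delta>) (s + \<delta>) t = 0" if "t \<le> s - \<delta>" for t using that by (simp add: bump_out)
    show "bump (s - \<delta>) (s + \<delta>) t = 0" if "s + \<delta> \<le> t" for t using that by (simp add: bump_out)
  qed
  have gd: "good (\<lambda>_. 0) {e} f"
    unfolding good_def f_def using e bump_smooth ab by auto
  have "Phi (\<lambda>_. 0) {e} f (ept e s) > 0"
    using e \<delta> by (simp add: Phi_ept f_def bump_in)
  moreover have "Phi (\<lambda>_. 0) {e} f y = 0"
  proof (cases "y \<in> iota ` EI")
    case True
    then obtain e' t where et: "e' \<in> E" "0 < t" "t < len e'" "y = ept e' t" using iEI_E by blast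
    show ?thesis
    proof (cases "e' = e")
      case True
      then have "\<delta> < \<bar>t - s\<bar>" using \<delta>(4) et by blast
      then have "t \<le> s - \<delta> \<or> s + \<delta> \<le> t" by auto
      then show ?thesis using et True by (simp add: Phi_ept f_def bump_out)
    next
      case False then show ?thesis using et by (simp add: Phi_ept)
    qed
  next
    case False then show ?thesis by (simp add: Phi_out)
  qed
  ultimately show ?thesis using gd by (intro exI[of _ "\<lambda>_. 0"] exI[of _ "{e}"] exI[of _ f]) auto
qed

lemma sep_nodes:
  assumes U: "closed U" "closed W" "U \<union> W = NN" "U \<inter> W = {}" "x \<in> U" "y \<in> W"
  shows "\<exists>c F f. good c F f \<and> Phi c F f x \<noteq> Phi c F f y"
proof -
  define c where "c p = (if p \<in> U then 1 else 0 :: real)" for p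
  have NG: "NN \<subseteq> Gbar" unfolding NN_def by auto
  have cU: "compact U" using U NG cpt by (metis Int_absorb1 Un_upper1 compact_Int_closed order_trans)
  have "continuous_on (U \<union> W) c"
  proof (rule continuous_on_closed_Un[OF U(1,2)])
    show "continuous_on U c" by (rule continuous_on_eq[OF continuous_on_const[of _ "1::real"]]) (auto simp: c_def)
    show "continuous_on W c" using U(4) by (intro continuous_on_eq[OF continuous_on_const[of _ "0::real"]]) (auto simp: c_def)
  qed
  then have cc: "continuous_on NN c" using U(3) by simp
  obtain u0 where u0: "u0 \<in> U" "\<forall>u\<in>U. infdist u0 W \<le> infdist u W"
    using continuous_attains_inf[OF cU, of "\<lambda>u. infdist u W"] U(5) continuous_on_infdist[OF continuous_on_id]
    by auto
  define d where "d = infdist u0 W"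
  have d: "d > 0" unfolding d_def using U u0 by (intro infdist_pos_not_in_closed) auto
  have dUW: "d \<le> dist u w" if "u \<in> U" "w \<in> W" for u w
    using u0 that infdist_le[of w W u] unfolding d_def by force
  define F where "F = {e\<in>E. (vpt (fst (ends e)) \<in> U) \<noteq> (vpt (snd (ends e)) \<in> U)}"
  have Fd: "F \<subseteq> {e\<in>E. d \<le> len e}"
  proof
    fix e assume eF: "e \<in> F"
    then have e: "e \<in> E" unfolding F_def by auto
    have N2: "vpt (fst (ends e)) \<in> NN" "vpt (snd (ends e)) \<in> NN" using e by (auto intro!: vpt_NN fst_V snd_V)
    have dd: "dist (vpt (fst (ends e))) (vpt (snd (ends e))) \<le> len e"
      using iso[OF Vtx_P Vtx_P] vd_edge[OF e] e by (simp add: fst_V snd_V)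
    have "d \<le> dist (vpt (fst (ends e))) (vpt (snd (ends e)))"
    proof (cases "vpt (fst (ends e)) \<in> U")
      case True
      then have "vpt (snd (ends e)) \<in> W" using eF N2 U(3) unfolding F_def by auto
      then show ?thesis using dUW True by blast
    next
      case False
      then have "vpt (snd (ends e)) \<in> U" "vpt (fst (ends e)) \<in> W" using eF N2 U(3) unfolding F_def by auto
      then show ?thesis using dUW by (metis dist_commute)
    qed
    then show "e \<in> {e\<in>E. d \<le> len e}" using dd e by auto
  qed
  have fF: "finite F" using finite_subset[OF Fd FL[OF d]] .
  define f where "f e t = c (vpt (fst (ends e))) + (c (vpt (snd (ends e))) - c (vpt (fst (ends e)))) * step (len e / 3) (2 * len e / 3) t" for e t
  have gd: "good c F f"
    unfolding good_def
  proof (intro conjI ballI)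
    show "continuous_on NN c" by (rule cc)
    show "F \<subseteq> E" unfolding F_def by auto
    show "finite F" by (rule fF)
  next
    fix e assume "e \<in> F"
    then have lp: "len e / 3 < 2 * len e / 3" using len_pos unfolding F_def by auto
    show "gsmooth (f e)" unfolding f_def
      by (intro gsmooth_add gsmooth_mult gsmooth_const step_smooth lp)
  next
    fix e assume "e \<in> F"
    then have lp: "0 < len e" using len_pos unfolding F_def by auto
    show "\<exists>a b. 0 < a \<and> b < len e \<and> (\<forall>t\<le>a. f e t = c (vpt (fst (ends e)))) \<and> (\<forall>t\<ge>b. f e t = c (vpt (snd (ends e))))"
      using lp by (intro exI[of _ "len e / 3"] exI[of _ "2 * len e / 3"]) (auto simp: f_def step_le step_ge)
  next
    fix e assume "e \<in> E - F"
    then show "c (vpt (fst (ends e))) = c (vpt (snd (ends e)))" unfolding F_def c_def by auto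
  qed
  have "x \<notin> iota ` EI" "y \<notin> iota ` EI" using U unfolding NN_def by auto
  then have "Phi c F f x = 1" "Phi c F f y = 0" using U by (auto simp: Phi_out c_def)
  then show ?thesis using gd by (intro exI[of _ c] exI[of _ F] exI[of _ f]) auto
qed

end


context MGC begin

definition OE where "OE = (\<Union>e\<in>E. \<Union>s\<in>{0<..<len e}. ball (ept e s) (min s (len e - s)))"

lemma OE_open: "open OE" unfolding OE_def by auto

lemma EI_OE: "iota ` EI \<subseteq> OE"
proof
  fix p assume "p \<in> iota ` EI"
  then obtain e t where "e \<in> E" "0 < t" "t < len e" "p = ept e t" using iEI_E by blast
  then show "p \<in> OE" unfolding OE_def by (auto intro!: bexI[of _ e] bexI[of _ t])
qed

lemma OE_EI: "Gbar \<inter> OE \<subseteq> iota ` EI"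
proof
  fix q assume "q \<in> Gbar \<inter> OE"
  then obtain e s where e: "e \<in> E" "0 < s" "s < len e" "q \<in> Gbar" "dist (ept e s) q < min s (len e - s)"
    unfolding OE_def by auto
  then show "q \<in> iota ` EI" using C3[OF e(1-3,4,5)] ept_EI by blast
qed

lemma NN_eq: "NN = Gbar \<inter> - OE"
  using EI_OE OE_EI iP_sub EI_P unfolding NN_def by blast

lemma NN_closed: "closed NN"
proof -
  have "closed Gbar" using cpt by (rule compact_imp_closed)
  then show ?thesis unfolding NN_eq using OE_open by (intro closed_Int) auto
qed

lemma NN_compact: "compact NN"
  unfolding NN_eq using cpt OE_open by (intro compact_Int_closed) auto

lemma NN_sub: "NN \<subseteq> Gbar" unfolding NN_def by auto

lemma cc_vertex:
  assumes v: "v \<in> V"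
  shows "connected_component_set NN (vpt v) = {vpt v}"
proof -
  define C where "C = connected_component_set NN (vpt v)"
  have xC: "vpt v \<in> C" unfolding C_def using vpt_NN[OF v] by (simp add: connected_component_refl)
  have CN: "C \<subseteq> NN" unfolding C_def by (rule connected_component_subset)
  have "ball (vpt v) (mlen v) \<inter> C = {} \<or> (- {vpt v}) \<inter> C = {}"
  proof (rule connectedD)
    show "connected C" unfolding C_def by simp
    show "open (ball (vpt v) (mlen v))" "open (- {vpt v})" by auto
    show "C \<subseteq> ball (vpt v) (mlen v) \<union> - {vpt v}" using mlen_pos[OF v] by auto
    show "ball (vpt v) (mlen v) \<inter> - {vpt v} \<inter> C = {}"
    proof (rule ccontr)
      assume "ball (vpt v) (mlen v) \<inter> - {vpt v} \<inter> C \<noteq> {}"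
      then obtain q where q0: "q \<in> ball (vpt v) (mlen v)" "q \<noteq> vpt v" "q \<in> C" by blast
      then have q: "dist (vpt v) q < mlen v" "q \<noteq> vpt v" "q \<in> NN" using CN by auto
      then have qG: "q \<in> Gbar" using NN_sub by auto
      obtain z where z: "z \<in> P" "q = iota z" using C4[OF v qG q(1)] by blast
      have "z \<notin> EI" using q(3) z unfolding NN_def by auto
      then obtain w where w: "z = Vtx w" "w \<in> V" using z(1) unfolding gpoints_def EI_def by auto
      have "vd v w < mlen v" using q(1) z w iso[OF Vtx_P[OF v] Vtx_P[OF w(2)]] by simp
      then have "w = v" using vd_lb[OF v w(2)] by fastforce
      then show False using q z w by simp
    qed
  qed
  moreover have "vpt v \<in> ball (vpt v) (mlen v)" using mlen_pos[OF v] by simp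
  ultimately have "C \<subseteq> {vpt v}" using xC by blast
  then show ?thesis using xC unfolding C_def by auto
qed

lemma Gint_sub: "Gint V E len B iota \<subseteq> iota ` P" unfolding Gint_def by auto

lemma TD:
  assumes td: "totally_disconnected (gboundary V E len B iota Gbar)" and x: "x \<in> NN"
  shows "connected_component_set NN x = {x}"
proof (rule NN_cases[OF x])
  fix v assume "v \<in> V" "x = vpt v" then show ?thesis using cc_vertex by simp
next
  assume p: "x \<in> Gbar" "x \<notin> iota ` P"
  define C where "C = connected_component_set NN x"
  have xC: "x \<in> C" unfolding C_def using x by (simp add: connected_component_refl)
  have "C \<inter> iota ` P = {}"
  proof (rule ccontr)
    assume "C \<inter> iota ` P \<noteq> {}"
    then obtain q where q: "q \<in> C" "q \<in> iota ` P" by auto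
    have "q \<in> NN" using q connected_component_subset unfolding C_def by blast
    have "\<exists>w\<in>V. q = vpt w"
    proof (rule NN_cases[OF \<open>q \<in> NN\<close>])
      fix w assume "w \<in> V" "q = vpt w" then show ?thesis by blast
    next
      assume "q \<in> Gbar" "q \<notin> iota ` P" then show ?thesis using q(2) by blast
    qed
    then obtain w where w: "w \<in> V" "q = vpt w" by blast
    have "connected_component_set NN q = C" unfolding C_def using q(1) C_def connected_component_eq by blast
    then have "C = {q}" using cc_vertex[OF w(1)] w by simp
    then show False using xC p q by auto
  qed
  then have Cb: "C \<subseteq> gboundary V E len B iota Gbar"
    using Gint_sub connected_component_subset[of NN x] NN_sub unfolding C_def gboundary_def by blast
  have Cc: "C \<subseteq> connected_component_set (gboundary V E len B iota Gbar) x"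
    using xC Cb unfolding C_def by (intro connected_component_maximal) auto
  have "x \<in> gboundary V E len B iota Gbar" using Cb xC by blast
  then have "connected_component_set (gboundary V E len B iota Gbar) x = {x}"
    using td unfolding totally_disconnected_def by blast
  then show ?thesis using Cc xC unfolding C_def by auto
qed

lemma sep_NN:
  assumes td: "totally_disconnected (gboundary V E len B iota Gbar)"
    and x: "x \<in> NN" and y: "y \<in> NN" and xy: "x \<noteq> y"
  shows "\<exists>U W. closed U \<and> closed W \<and> U \<union> W = NN \<and> U \<inter> W = {} \<and> x \<in> U \<and> y \<in> W"
proof -
  have "separated_between (top_of_set NN) {x} {y}"
  proof (rule cut_wire_fence_theorem_gen)
    show "compact_space (top_of_set NN)" using NN_compact by (simp add: compact_space_subtopology)
    show "Hausdorff_space (top_of_set NN) \<or> regular_space (top_of_set NN) \<or> normal_space (top_of_set NN)"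
      by (simp add: Hausdorff_space_subtopology)
    show "compactin (top_of_set NN) {x}" using x by (simp add: compactin_subtopology)
    show "closedin (top_of_set NN) {y}" using y by (simp add: closedin_subtopology_refl closed_subset)
  next
    fix C assume "connectedin (top_of_set NN) C"
    then have C: "connected C" "C \<subseteq> NN" by (auto simp: connectedin_subtopology)
    show "disjnt C {x} \<or> disjnt C {y}"
    proof (rule ccontr)
      assume "\<not> (disjnt C {x} \<or> disjnt C {y})"
      then have "x \<in> C" "y \<in> C" by auto
      then have "C \<subseteq> connected_component_set NN x" using C by (intro connected_component_maximal) auto
      then show False using TD[OF td x] \<open>y \<in> C\<close> xy by auto
    qed
  qed
  then obtain U W where UW: "closedin (top_of_set NN) U" "closedin (top_of_set NN) W"
    "U \<union> W = NN" "disjnt U W" "{x} \<subseteq> U" "{y} \<subseteq> W"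
    unfolding separated_between_alt by auto
  have "closed U" "closed W" using UW(1,2) NN_closed closedin_closed_trans by blast+
  then show ?thesis using UW by (intro exI[of _ U] exI[of _ W]) (auto simp: disjnt_def)
qed

end


context MGC begin

definition RR where "RR = {\<phi>. \<exists>c F f. good c F f \<and> \<phi> = Phi c F f}"

lemma RR_A: "\<phi> \<in> RR \<Longrightarrow> \<phi> \<in> algebraA V E ends len iota Gbar"
  unfolding RR_def using GL by blast

lemma RR_cont: "\<phi> \<in> RR \<Longrightarrow> continuous_on Gbar \<phi>"
  unfolding RR_def using Phi_cont by blast

lemma RR_const: "(\<lambda>_. k) \<in> RR"
proof -
  have "(\<lambda>_. k) = Phi (\<lambda>_. k) {} (\<lambda>_ _. 0)" by (rule Phi_const[symmetric])
  then show ?thesis unfolding RR_def using good_const[of k] by blast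
qed

lemma RR_op:
  assumes "\<phi> \<in> RR" "\<psi> \<in> RR"
    and sm: "\<And>u w. gsmooth u \<Longrightarrow> gsmooth w \<Longrightarrow> gsmooth (\<lambda>x. op (u x) (w x))"
    and ct: "\<And>u w. continuous_on NN u \<Longrightarrow> continuous_on NN w \<Longrightarrow> continuous_on NN (\<lambda>x. op (u x) (w x))"
  shows "(\<lambda>x. op (\<phi> x) (\<psi> x)) \<in> RR"
proof -
  obtain c1 F1 f1 where 1: "good c1 F1 f1" "\<phi> = Phi c1 F1 f1" using assms(1) unfolding RR_def by blast
  obtain c2 F2 f2 where 2: "good c2 F2 f2" "\<psi> = Phi c2 F2 f2" using assms(2) unfolding RR_def by blast
  obtain c F f where "good c F f" "(\<lambda>p. op (Phi c1 F1 f1 p) (Phi c2 F2 f2 p)) = Phi c F f"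
    using good_op[where op=op, OF 1(1) 2(1) sm ct] by blast
  then show ?thesis unfolding RR_def using 1 2 by blast
qed

lemma RR_add: "\<phi> \<in> RR \<Longrightarrow> \<psi> \<in> RR \<Longrightarrow> (\<lambda>x. \<phi> x + \<psi> x) \<in> RR"
  by (rule RR_op[where op = "(+)"]) (auto intro: gsmooth_add continuous_on_add)

lemma RR_mult: "\<phi> \<in> RR \<Longrightarrow> \<psi> \<in> RR \<Longrightarrow> (\<lambda>x. \<phi> x * \<psi> x) \<in> RR"
  by (rule RR_op[where op = "(*)"]) (auto intro: gsmooth_mult continuous_on_mult)

lemma sep_all:
  assumes td: "totally_disconnected (gboundary V E len B iota Gbar)"
    and x: "x \<in> Gbar" and y: "y \<in> Gbar" and xy: "x \<noteq> y"
  shows "\<exists>\<phi>\<in>RR. \<phi> x \<noteq> \<phi> y"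
proof (cases "x \<in> iota ` EI")
  case True
  then obtain e t where "e \<in> E" "0 < t" "t < len e" "x = ept e t" using iEI_E by blast
  then show ?thesis using sep_edge[of e t y] y xy unfolding RR_def by blast
next
  case False
  show ?thesis
  proof (cases "y \<in> iota ` EI")
    case True
    then obtain e t where "e \<in> E" "0 < t" "t < len e" "y = ept e t" using iEI_E by blast
    then obtain c F f where "good c F f" "Phi c F f y \<noteq> Phi c F f x" using sep_edge[of e t x] x xy by auto
    moreover have "Phi c F f \<in> RR" using calculation unfolding RR_def by blast
    ultimately show ?thesis by (metis)
  next
    case False2: False
    have "x \<in> NN" "y \<in> NN" using x y False False2 unfolding NN_def by auto
    then obtain U W where "closed U" "closed W" "U \<union> W = NN" "U \<inter> W = {}" "x \<in> U" "y \<in> W"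
      using sep_NN[OF td \<open>x \<in> NN\<close> \<open>y \<in> NN\<close> xy] by blast
    then obtain c F f where "good c F f" "Phi c F f x \<noteq> Phi c F f y" using sep_nodes by blast
    moreover have "Phi c F f \<in> RR" using calculation unfolding RR_def by blast
    ultimately show ?thesis by (metis)
  qed
qed

lemma bd_eq: "gboundary V E len B iota Gbar = Gbar \<inter> - (OE \<union> (\<Union>v\<in>V - B. ball (vpt v) (mlen v)))"
proof (intro equalityI subsetI)
  fix p assume p: "p \<in> gboundary V E len B iota Gbar"
  then have pG: "p \<in> Gbar" "p \<notin> Gint V E len B iota" unfolding gboundary_def by auto
  have "p \<notin> OE"
  proof
    assume "p \<in> OE"
    then have "p \<in> iota ` EI" using OE_EI pG by blast
    then show False using pG unfolding Gint_def EI_def gpoints_def by auto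
  qed
  moreover have "p \<notin> ball (vpt v) (mlen v)" if v: "v \<in> V - B" for v
  proof
    assume "p \<in> ball (vpt v) (mlen v)"
    then have d: "dist (vpt v) p < mlen v" by simp
    then obtain z where z: "z \<in> P" "p = iota z" using C4[of v p] v pG by auto
    have "gd (Vtx v) z < mlen v" using d z iso[OF Vtx_P z(1)] v by simp
    then have "z = Vtx v \<or> (\<exists>e t. z = EPt e t)" using L6[of v z] v z by blast
    then have "z \<notin> Vtx ` B" using v by auto
    then show False using pG z unfolding Gint_def by auto
  qed
  ultimately show "p \<in> Gbar \<inter> - (OE \<union> (\<Union>v\<in>V - B. ball (vpt v) (mlen v)))" using pG by auto
next
  fix p assume p: "p \<in> Gbar \<inter> - (OE \<union> (\<Union>v\<in>V - B. ball (vpt v) (mlen v)))"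
  have "p \<notin> Gint V E len B iota"
  proof
    assume "p \<in> Gint V E len B iota"
    then obtain z where z: "z \<in> P" "z \<notin> Vtx ` B" "p = iota z" unfolding Gint_def by auto
    show False
    proof (rule gpointsE[OF z(1)])
      fix v assume "z = Vtx v" "v \<in> V"
      then have "p \<in> ball (vpt v) (mlen v)" "v \<in> V - B" using z mlen_pos by auto
      then show False using p by auto
    next
      fix e t assume "z = EPt e t" "e \<in> E" "0 < t" "t < len e"
      then have "p \<in> iota ` EI" using z ept_EI by auto
      then show False using p EI_OE by auto
    qed
  qed
  then show "p \<in> gboundary V E len B iota Gbar" using p unfolding gboundary_def by auto
qed

lemma bd_compact: "compact (gboundary V E len B iota Gbar)"
  unfolding bd_eq using cpt OE_open by (intro compact_Int_closed) auto

lemma bd_sub: "gboundary V E len B iota Gbar \<subseteq> Gbar"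
  unfolding gboundary_def by auto

end

theorem theorem2p7:
  fixes V :: "'v set" and E :: "'e set" and ends :: "'e \<Rightarrow> 'v \<times> 'v" and len :: "'e \<Rightarrow> real"
    and B :: "'v set" and iota :: "('v, 'e) gpoint \<Rightarrow> 'p::metric_space" and Gbar :: "'p set"
  assumes "metric_graph V E ends len"
    and "B \<subseteq> V" and "\<forall>v\<in>V. degree E ends v = 1 \<longrightarrow> v \<in> B"
    and "is_completion V E ends len iota Gbar"
    and "compact Gbar"
    and "totally_disconnected (gboundary V E len B iota Gbar)"
  shows "(\<forall>f. continuous_on Gbar f \<longrightarrow> (\<forall>\<epsilon>>0. \<exists>phi\<in>algebraA V E ends len iota Gbar.
            \<forall>x\<in>Gbar. \<bar>f x - phi x\<bar> < \<epsilon>)) \<and>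
         (\<forall>g. continuous_on (gboundary V E len B iota Gbar) g \<longrightarrow> (\<forall>\<epsilon>>0.
            \<exists>phi\<in>algebraA V E ends len iota Gbar.
            \<forall>x\<in>gboundary V E len B iota Gbar. \<bar>g x - phi x\<bar> < \<epsilon>))"
proof -
  interpret MGC V E ends len iota Gbar
    by unfold_locales (use assms in auto)
  note td = assms(6)
  have part1: "\<exists>phi\<in>algebraA V E ends len iota Gbar. \<forall>x\<in>Gbar. \<bar>f x - phi x\<bar> < \<epsilon>"
    if f: "continuous_on Gbar f" and e: "\<epsilon> > 0" for f :: "'p \<Rightarrow> real" and \<epsilon> :: real
  proof -
    have "\<exists>g. g \<in> RR \<and> (\<forall>x\<in>Gbar. \<bar>f x - g x\<bar> < \<epsilon>)"
    proof (rule Stone_Weierstrass_HOL[where P = "\<lambda>g. g \<in> RR"])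
      show "compact Gbar" by (rule cpt)
      show "\<And>c. (\<lambda>x. c) \<in> RR" by (rule RR_const)
      show "\<And>f. f \<in> RR \<Longrightarrow> continuous_on Gbar f" by (rule RR_cont)
      show "\<And>f g. f \<in> RR \<and> g \<in> RR \<Longrightarrow> (\<lambda>x. f x + g x) \<in> RR" using RR_add by blast
      show "\<And>f g. f \<in> RR \<and> g \<in> RR \<Longrightarrow> (\<lambda>x. f x * g x) \<in> RR" using RR_mult by blast
      show "\<And>x y. x \<in> Gbar \<and> y \<in> Gbar \<and> x \<noteq> y \<Longrightarrow> \<exists>f. f \<in> RR \<and> f x \<noteq> f y"
        using sep_all[OF td] by blast
    qed (use f e in auto)
    then show ?thesis using RR_A by blast
  qed
  have part2: "\<exists>phi\<in>algebraA V E ends len iota Gbar. \<forall>x\<in>gboundary V E len B iota Gbar. \<bar>g x - phi x\<bar> < \<epsilon>"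
    if g: "continuous_on (gboundary V E len B iota Gbar) g" and e: "\<epsilon> > 0" for g :: "'p \<Rightarrow> real" and \<epsilon> :: real
  proof -
    define Bd where "Bd = gboundary V E len B iota Gbar"
    have "\<exists>h. (\<exists>\<phi>\<in>RR. \<forall>x\<in>Bd. h x = \<phi> x) \<and> (\<forall>x\<in>Bd. \<bar>g x - h x\<bar> < \<epsilon>)"
    proof (rule Stone_Weierstrass_HOL[where P = "\<lambda>h. \<exists>\<phi>\<in>RR. \<forall>x\<in>Bd. h x = \<phi> x"])
      show "compact Bd" unfolding Bd_def by (rule bd_compact)
      show "\<exists>\<phi>\<in>RR. \<forall>x\<in>Bd. c = \<phi> x" for c by (rule bexI[of _ "\<lambda>_. c"]) (simp_all add: RR_const)
      show "continuous_on Bd h" if H: "\<exists>\<phi>\<in>RR. \<forall>x\<in>Bd. h x = \<phi> x" for h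
      proof -
        obtain \<phi> where "\<phi> \<in> RR" "\<forall>x\<in>Bd. h x = \<phi> x" using H by blast
        moreover have "continuous_on Bd \<phi>"
          using RR_cont[OF \<open>\<phi> \<in> RR\<close>] bd_sub unfolding Bd_def by (rule continuous_on_subset)
        ultimately show ?thesis using continuous_on_eq by metis
      qed
      show "\<exists>\<phi>\<in>RR. \<forall>x\<in>Bd. h1 x + h2 x = \<phi> x"
        if "(\<exists>\<phi>\<in>RR. \<forall>x\<in>Bd. h1 x = \<phi> x) \<and> (\<exists>\<phi>\<in>RR. \<forall>x\<in>Bd. h2 x = \<phi> x)" for h1 h2
        using that RR_add by fastforce
      show "\<exists>\<phi>\<in>RR. \<forall>x\<in>Bd. h1 x * h2 x = \<phi> x"
        if "(\<exists>\<phi>\<in>RR. \<forall>x\<in>Bd. h1 x = \<phi> x) \<and> (\<exists>\<phi>\<in>RR. \<forall>x\<in>Bd. h2 x = \<phi> x)" for h1 h2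
        using that RR_mult by fastforce
      show "\<exists>h. (\<exists>\<phi>\<in>RR. \<forall>x\<in>Bd. h x = \<phi> x) \<and> h x \<noteq> h y" if H: "x \<in> Bd \<and> y \<in> Bd \<and> x \<noteq> y" for x y
      proof -
        obtain \<phi> where "\<phi> \<in> RR" "\<phi> x \<noteq> \<phi> y" using sep_all[OF td, of x y] H bd_sub unfolding Bd_def by blast
        then show ?thesis by blast
      qed
    qed (use g e in \<open>auto simp: Bd_def\<close>)
    then show ?thesis using RR_A unfolding Bd_def by fastforce
  qed
  show ?thesis using part1 part2 by blast
qed


end
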